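(* Let $\nu\in\mathcal{S}^1$ and let $(u_\varepsilon)$, $u_\varepsilon\in\mathcal{SF}_\varepsilon$, be a sequence (indexed by $\varepsilon\to0$) such that $\chi(u_\varepsilon)\to\chi_\nu$ in $L^1(Q^\nu)$ and $F_\varepsilon(u_\varepsilon,Q^\nu)\to\psi(1,1,\nu)$. Then for every $\delta>0$ there exist a sequence $\sigma_\varepsilon\to0$ (depending on $\delta$) and strips $S_\varepsilon=S_{\varepsilon,r_\varepsilon}\in\mathscr{S}^\nu_{\varepsilon,\delta}$ such that $$F_\varepsilon(u_\varepsilon,S_\varepsilon)+\|\chi(u_\varepsilon)-\chi_\nu\|_{L^1(S_\varepsilon)}\le\varepsilon\sigma_\varepsilon .$$
   Context: Lattice: $\hat e_1=(1,0)$, $\hat e_2=\tfrac12(1,\sqrt3)$, $\hat e_3=\tfrac12(-1,\sqrt3)$, $\mathcal{L}=\{z_1\hat e_1+z_2\hat e_2\colon z\in\mathbb{Z}^2\}$, $\mathcal{L}^1=\{z_1(\hat e_1+\hat e_2)+z_2(\hat e_2+\hat e_3)\colon z\in\mathbb{Z}^2\}$, $\mathcal{L}^2=\mathcal{L}^1+\hat e_1$, $\mathcal{L}^3=\mathcal{L}^1+\hat e_2$. $\mathcal{T}(\mathbb{R}^2)$: closed triangles $\mathrm{conv}\{i,j,k\}$, $i,j,k\in\mathcal L$ pairwise at distance 1, labelled $i\in\mathcal{L}^1,j\in\mathcal{L}^2,k\in\mathcal{L}^3$. For $\varepsilon>0$: $\mathcal{L}_\varepsilon=\varepsilon\mathcal{L}$,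 $\mathcal{T}_\varepsilon(\mathbb{R}^2)=\varepsilon\mathcal{T}(\mathbb{R}^2)$, $\mathcal{T}_\varepsilon(A)=\{T\in\mathcal{T}_\varepsilon(\mathbb{R}^2)\colon T\subset A\}$, $\mathcal{SF}_\varepsilon=\{u\colon\mathcal{L}_\varepsilon\to\mathcal{S}^1\}$. $F_\varepsilon(u,T)=\varepsilon|u(\varepsilon i)+u(\varepsilon j)+u(\varepsilon k)|^2$, $F_\varepsilon(u,A)=\sum_{T\in\mathcal{T}_\varepsilon(A)}F_\varepsilon(u,T)$. With $v\times w=v_1w_2-v_2w_1$, $\chi(u,T)=\frac{2}{3\sqrt3}\big(u(\varepsilon i)\times u(\varepsilon j)+u(\varepsilon j)\times u(\varepsilon k)+u(\varepsilon k)\times u(\varepsilon i)\big)$ and $\chi(u)$ equals $\chi(u,T)$ on the interior of each $T$. For $\nu\in\mathcal S^1$: $\nu^\perp=(-\nu_2,\nu_1)$, $R^\nu_{\ell,h}=\{x\colon|\langle x,\nu^\perp\rangle|<\ell/2,\ |\langle x,\nu\rangle|<h/2\}$, $Q^\nu_\rho=R^\nu_{\rho,\rho}$, $Q^\nu=Q^\nu_1$, $\chi_\nu(x)=1$ if $\langle x,\nu\rangle\ge0$ and $-1$ otherwise, and $\psi(\ell,h,\nu)=\frac1\ell\inf\{\liminf_{\varepsilon\to0}F_\varepsilon(u_\varepsilon,R^\nu_{\ell,h})\colon \chi(u_\varepsilon)\to\chi_\nu\text{ in }L^1(R^\nu_{\ell,h})\}$, the infimum over all sequences $\varepsilon\to0$,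 $u_\varepsilon\in\mathcal{SF}_\varepsilon$. For $\delta>0$ and $\varepsilon>0$ the class of strips is $\mathscr{S}^\nu_{\varepsilon,\delta}=\{S_{\varepsilon,r}:=Q^\nu_{r+12\varepsilon}\setminus(\overline{Q^\nu_r}\cup\overline{R^\nu_{1,\delta}})\colon r\in(1-3\delta,1-2\delta)\}$. *)

theory Defs
  imports "HOL-Analysis.Analysis"
begin

type_synonym pt = "real \<times> real"

definition e1 :: pt where "e1 = (1, 0)"
definition e2 :: pt where "e2 = (1/2, sqrt 3 / 2)"
definition e3 :: pt where "e3 = (-1/2, sqrt 3 / 2)"

definition Lat :: "pt set" where
  "Lat = {of_int a *\<^sub>R e1 + of_int b *\<^sub>R e2 | a b :: int. True}"
definition Lat1 :: "pt set" where
  "Lat1 = {of_int a *\<^sub>R (e1 + e2) + of_int b *\<^sub>R (e2 + e3) | a b :: int. True}"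
definition Lat2 :: "pt set" where "Lat2 = (\<lambda>x. x + e1) ` Lat1"
definition Lat3 :: "pt set" where "Lat3 = (\<lambda>x. x + e2) ` Lat1"

definition Tri :: "(pt \<times> pt \<times> pt) set" where
  "Tri = {(i, j, k). i \<in> Lat1 \<and> j \<in> Lat2 \<and> k \<in> Lat3 \<and>
                    dist i j = 1 \<and> dist j k = 1 \<and> dist k i = 1}"

definition tri_set :: "real \<Rightarrow> pt \<times> pt \<times> pt \<Rightarrow> pt set" where
  "tri_set \<epsilon> t = (case t of (i, j, k) \<Rightarrow> convex hull {\<epsilon> *\<^sub>R i, \<epsilon> *\<^sub>R j, \<epsilon> *\<^sub>R k})"

text \<open>Triangles of T_eps(A), indexed by their (unscaled) labelled vertex triples.\<close>
definition TriIn :: "real \<Rightarrow> pt set \<Rightarrow> (pt \<times> pt \<times> pt) set" where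
  "TriIn \<epsilon> A = {t \<in> Tri. tri_set \<epsilon> t \<subseteq> A}"

definition SF :: "real \<Rightarrow> (pt \<Rightarrow> pt) set" where
  "SF \<epsilon> = {u. \<forall>x \<in> Lat. u (\<epsilon> *\<^sub>R x) \<in> sphere 0 1}"

definition Ftri :: "real \<Rightarrow> (pt \<Rightarrow> pt) \<Rightarrow> pt \<times> pt \<times> pt \<Rightarrow> real" where
  "Ftri \<epsilon> u t = (case t of (i, j, k) \<Rightarrow>
     \<epsilon> * (norm (u (\<epsilon> *\<^sub>R i) + u (\<epsilon> *\<^sub>R j) + u (\<epsilon> *\<^sub>R k)))\<^sup>2)"

definition Fen :: "real \<Rightarrow> (pt \<Rightarrow> pt) \<Rightarrow> pt set \<Rightarrow> real" where
  "Fen \<epsilon> u A = (\<Sum>t \<in> TriIn \<epsilon> A. Ftri \<epsilon> u t)"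

definition cross2 :: "pt \<Rightarrow> pt \<Rightarrow> real" where
  "cross2 v w = fst v * snd w - snd v * fst w"

definition chiT :: "real \<Rightarrow> (pt \<Rightarrow> pt) \<Rightarrow> pt \<times> pt \<times> pt \<Rightarrow> real" where
  "chiT \<epsilon> u t = (case t of (i, j, k) \<Rightarrow>
     2 / (3 * sqrt 3) * (cross2 (u (\<epsilon> *\<^sub>R i)) (u (\<epsilon> *\<^sub>R j))
                        + cross2 (u (\<epsilon> *\<^sub>R j)) (u (\<epsilon> *\<^sub>R k))
                        + cross2 (u (\<epsilon> *\<^sub>R k)) (u (\<epsilon> *\<^sub>R i))))"

text \<open>Chirality field: chi(u,T) on the interior of each triangle T; on the (null) set of
  triangle edges we set it to 0.\<close>
definition chi :: "real \<Rightarrow> (pt \<Rightarrow> pt) \<Rightarrow> pt \<Rightarrow> real" where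
  "chi \<epsilon> u x = (if \<exists>t \<in> Tri. x \<in> interior (tri_set \<epsilon> t)
                 then chiT \<epsilon> u (SOME t. t \<in> Tri \<and> x \<in> interior (tri_set \<epsilon> t)) else 0)"

definition perp :: "pt \<Rightarrow> pt" where "perp \<nu> = (- snd \<nu>, fst \<nu>)"

definition Rect :: "pt \<Rightarrow> real \<Rightarrow> real \<Rightarrow> pt set" where
  "Rect \<nu> l h = {x. \<bar>inner x (perp \<nu>)\<bar> < l / 2 \<and> \<bar>inner x \<nu>\<bar> < h / 2}"

definition Sq :: "pt \<Rightarrow> real \<Rightarrow> pt set" where "Sq \<nu> \<rho> = Rect \<nu> \<rho> \<rho>"

definition chinu :: "pt \<Rightarrow> pt \<Rightarrow> real" where
  "chinu \<nu> x = (if inner x \<nu> \<ge> 0 then 1 else -1)"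

definition L1dist :: "pt set \<Rightarrow> (pt \<Rightarrow> real) \<Rightarrow> (pt \<Rightarrow> real) \<Rightarrow> real" where
  "L1dist A f g = (LINT x:A|lborel. \<bar>f x - g x\<bar>)"

definition psi :: "real \<Rightarrow> real \<Rightarrow> pt \<Rightarrow> ereal" where
  "psi l h \<nu> = Inf {liminf (\<lambda>n. ereal (Fen (eps n) (u n) (Rect \<nu> l h))) | eps u.
        (\<forall>n. eps n > 0) \<and> eps \<longlonglongrightarrow> 0 \<and> (\<forall>n. u n \<in> SF (eps n)) \<and>
        (\<lambda>n. L1dist (Rect \<nu> l h) (chi (eps n) (u n)) (chinu \<nu>)) \<longlonglongrightarrow> 0} / ereal l"

definition strip :: "pt \<Rightarrow> real \<Rightarrow> real \<Rightarrow> real \<Rightarrow> pt set" where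
  "strip \<nu> \<delta> \<epsilon> r = Sq \<nu> (r + 12 * \<epsilon>) - (closure (Sq \<nu> r) \<union> closure (Rect \<nu> 1 \<delta>))"

end

theory Submission
  imports Defs
begin

definition lp :: "int \<Rightarrow> int \<Rightarrow> pt" where
  "lp m n = (real_of_int m + real_of_int n / 2, real_of_int n * sqrt 3 / 2)"

definition aA :: pt where "aA = (1, - 1 / sqrt 3)"
definition aB :: pt where "aB = (0, 2 / sqrt 3)"

lemma sqrt3_sq: "sqrt 3 * sqrt 3 = (3::real)" by simp
lemma sqrt3_pos: "sqrt 3 > (0::real)" by simp

lemma inner_aA_lp [simp]: "inner aA (lp m n) = m"
  by (simp add: aA_def lp_def inner_prod_def field_simps)
lemma inner_aB_lp [simp]: "inner aB (lp m n) = n"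
  by (simp add: aB_def lp_def inner_prod_def field_simps)

lemma lp_recon: "y = (inner aA y + inner aB y / 2, inner aB y * sqrt 3 / 2)"
  by (cases y) (simp add: aA_def aB_def inner_prod_def field_simps)

lemma lp_inj [simp]: "lp m n = lp m' n' \<longleftrightarrow> m = m' \<and> n = n'"
  by (metis inner_aA_lp inner_aB_lp of_int_eq_iff)

lemma lp_add: "lp m n + lp m' n' = lp (m + m') (n + n')"
  by (simp add: lp_def field_simps)
lemma lp_diff: "lp m n - lp m' n' = lp (m - m') (n - n')"
  by (simp add: lp_def field_simps)
lemma lp_scale: "c *\<^sub>R lp m n = (c * m + c * n / 2, c * n * sqrt 3 / 2)"
  by (simp add: lp_def field_simps)

lemma norm_lp_sq: "(norm (lp a b))\<^sup>2 = real_of_int (a*a + a*b + b*b)"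
proof -
  have "(norm (lp a b))\<^sup>2 = (a + b/2)^2 + (b * sqrt 3 / 2)^2"
    by (simp add: lp_def norm_Pair power2_eq_square)
  also have "\<dots> = a*a + a*b + b*b" by (simp add: power2_eq_square field_simps)
  finally show ?thesis by simp
qed

lemma int_six: fixes a b :: int assumes "a*a + a*b + b*b = 1"
  shows "(a,b) \<in> {(1,0),(-1,0),(0,1),(0,-1),(1,-1),(-1,1)}"
proof -
  have h1: "(2*a+b)*(2*a+b) + 3*(b*b) = 4" using assms by algebra
  have h2: "(2*b+a)*(2*b+a) + 3*(a*a) = 4" using assms by algebra
  have sq1: "\<bar>c\<bar> \<le> 1" if "c*c \<le> 1" for c :: int
    using that by (smt (verit) abs_zmult_eq_1 mult_le_0_iff)
  have "b*b \<le> 1" using h1 zero_le_square[of "2*a+b"] by linarith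
  hence "\<bar>b\<bar> \<le> 1" by (rule sq1)
  moreover have "a*a \<le> 1" using h2 zero_le_square[of "2*b+a"] by linarith
  hence "\<bar>a\<bar> \<le> 1" by (rule sq1)
  ultimately have "a \<in> {-1,0,1}" "b \<in> {-1,0,1}" by auto
  then show ?thesis using assms by auto
qed

lemma dist_lp: "dist (lp m n) (lp m' n') = 1 \<longleftrightarrow> (m - m', n - n') \<in> {(1,0),(-1,0),(0,1),(0,-1),(1,-1),(-1,1)}"
proof -
  have "dist (lp m n) (lp m' n') = 1 \<longleftrightarrow> (norm (lp (m-m') (n-n')))\<^sup>2 = 1"
    using norm_ge_zero[of "lp (m-m') (n-n')"] by (auto simp add: dist_norm lp_diff power2_eq_1_iff simp del: norm_ge_zero)
  also have "\<dots> \<longleftrightarrow> (m-m')*(m-m') + (m-m')*(n-n') + (n-n')*(n-n') = 1"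
    unfolding norm_lp_sq by (metis of_int_1 of_int_eq_iff)
  also have "\<dots> \<longleftrightarrow> (m - m', n - n') \<in> {(1,0),(-1,0),(0,1),(0,-1),(1,-1),(-1,1)}"
  proof
    assume "(m-m')*(m-m') + (m-m')*(n-n') + (n-n')*(n-n') = 1"
    from int_six[OF this] show "(m - m', n - n') \<in> {(1,0),(-1,0),(0,1),(0,-1),(1,-1),(-1,1)}" .
  next
    assume "(m - m', n - n') \<in> {(1,0),(-1,0),(0,1),(0,-1),(1,-1),(-1,1)}"
    then show "(m-m')*(m-m') + (m-m')*(n-n') + (n-n')*(n-n') = 1" by auto
  qed
  finally show ?thesis .
qed

lemma Lat1_eq: "Lat1 = {lp m n | m n. m mod 3 = n mod 3}"
proof -
  have e: "of_int a *\<^sub>R (e1 + e2) + of_int b *\<^sub>R (e2 + e3) = lp (a - b) (a + 2*b)" for a b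
    by (simp add: e1_def e2_def e3_def lp_def field_simps)
  show ?thesis
  proof (rule set_eqI, rule iffI)
    fix x assume "x \<in> Lat1"
    then obtain a b where x: "x = lp (a - b) (a + 2*b)" unfolding Lat1_def e by blast
    have "(a - b) mod 3 = (a + 2*b) mod 3" by presburger
    then show "x \<in> {lp m n | m n. m mod 3 = n mod 3}" using x by blast
  next
    fix x assume "x \<in> {lp m n | m n. m mod 3 = n mod 3}"
    then obtain m n where x: "x = lp m n" and "m mod 3 = n mod 3" by blast
    then obtain b where b: "n - m = 3 * b" by (metis mod_eq_dvd_iff dvd_def)
    have "lp m n = lp ((m + b) - b) ((m+b) + 2 * b)" using b by simp
    then show "x \<in> Lat1" unfolding Lat1_def e x by blast
  qed
qed

lemma Lat2_eq: "Lat2 = {lp m n | m n. (m - n) mod 3 = 1}"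
proof -
  have e1l: "e1 = lp 1 0" by (simp add: e1_def lp_def)
  show ?thesis unfolding Lat2_def Lat1_eq e1l
  proof (auto simp: lp_add)
    fix m n :: int assume "m mod 3 = n mod 3" then show "(m + 1 - n) mod 3 = 1" by presburger
  next
    fix m n :: int assume "(m - n) mod 3 = 1"
    then show "lp m n \<in> (\<lambda>x. x + lp 1 0) ` {lp m n |m n. m mod 3 = n mod 3}"
      by (intro image_eqI[of _ _ "lp (m - 1) n"]) (auto simp: lp_add, presburger)
  qed
qed

lemma Lat3_eq: "Lat3 = {lp m n | m n. (m - n) mod 3 = 2}"
proof -
  have e2l: "e2 = lp 0 1" by (simp add: e2_def lp_def)
  show ?thesis unfolding Lat3_def Lat1_eq e2l
  proof (auto simp: lp_add)
    fix m n :: int assume "m mod 3 = n mod 3" then show "(m - (n+1)) mod 3 = 2" by presburger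
  next
    fix m n :: int assume "(m - n) mod 3 = 2"
    then show "lp m n \<in> (\<lambda>x. x + lp 0 1) ` {lp m n |m n. m mod 3 = n mod 3}"
      by (intro image_eqI[of _ _ "lp m (n - 1)"]) (auto simp: lp_add, presburger)
  qed
qed


definition triF :: "int \<Rightarrow> int \<Rightarrow> bool \<Rightarrow> pt \<times> pt \<times> pt" where
  "triF p q b = (let d = (p - q) mod 3 in
     if b then
       (if d = 0 then (lp p q, lp (p+1) q, lp p (q+1))
        else if d = 1 then (lp p (q+1), lp p q, lp (p+1) q)
        else (lp (p+1) q, lp p (q+1), lp p q))
     else
       (if d = 0 then (lp (p+1) (q+1), lp (p+1) q, lp p (q+1))
        else if d = 1 then (lp p (q+1), lp (p+1) (q+1), lp (p+1) q)
        else (lp (p+1) q, lp p (q+1), lp (p+1) (q+1))))"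

definition vset :: "int \<Rightarrow> int \<Rightarrow> bool \<Rightarrow> pt set" where
  "vset p q b = (if b then {lp p q, lp (p+1) q, lp p (q+1)} else {lp (p+1) q, lp p (q+1), lp (p+1) (q+1)})"

lemma mod3_cases: fixes d :: int obtains "d mod 3 = 0" | "d mod 3 = 1" | "d mod 3 = 2"
proof -
  have "d mod 3 = 0 \<or> d mod 3 = 1 \<or> d mod 3 = 2" by presburger
  then show thesis using that by metis
qed

lemma triF_vset: "(case triF p q b of (i, j, k) \<Rightarrow> {i, j, k}) = vset p q b"
  by (rule mod3_cases[of "p - q"]) (auto simp: triF_def vset_def Let_def)

lemma tri_set_triF: "tri_set \<epsilon> (triF p q b) = convex hull ((\<lambda>v. \<epsilon> *\<^sub>R v) ` vset p q b)"
proof -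
  obtain i j k where t: "triF p q b = (i, j, k)" by (metis prod_cases3)
  have "vset p q b = {i,j,k}" using triF_vset[of p q b] t by simp
  then show ?thesis by (simp add: tri_set_def t)
qed

lemma six_tri: fixes a1 b1 a2 b2 :: int
  assumes "(a1,b1) \<in> {(1,0),(0,-1),(-1,1)}" "(a2,b2) \<in> {(-1,0),(0,1),(1,-1)}"
    "(a2-a1,b2-b1) \<in> {(1,0),(-1,0),(0,1),(0,-1),(1,-1),(-1,1)}"
  shows "(a1,b1,a2,b2) \<in> {(1,0,0,1),(1,0,1,-1),(0,-1,1,-1),(0,-1,-1,0),(-1,1,-1,0),(-1,1,0,1)}"
  using assms(1,2) by (elim insertE emptyE; use assms(3) in simp)

lemma Tri_triF: "triF p q b \<in> Tri"
  apply (rule mod3_cases[of "p - q"])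
  apply (auto simp: triF_def Let_def Tri_def Lat1_eq Lat2_eq Lat3_eq dist_lp)
  apply presburger+
  done

lemma Tri_imp_triF: assumes "t \<in> Tri" shows "\<exists>p q b. t = triF p q b"
proof -
  obtain i j k where t: "t = (i,j,k)" by (metis prod_cases3)
  from assms t obtain m n m' n' m'' n'' where
    i: "i = lp m n" "m mod 3 = n mod 3" and j: "j = lp m' n'" "(m' - n') mod 3 = 1"
    and k: "k = lp m'' n''" "(m'' - n'') mod 3 = 2"
    and d1: "dist i j = 1" and d2: "dist j k = 1" and d3: "dist k i = 1"
    unfolding Tri_def Lat1_eq Lat2_eq Lat3_eq by blast
  define a1 where "a1 = m' - m"
  define b1 where "b1 = n' - n"
  define a2 where "a2 = m'' - m"
  define b2 where "b2 = n'' - n"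
  have neg: "(-a,-b) \<in> {(1,0),(-1,0),(0,1),(0,-1),(1,-1),(-1,1)}"
    if "(a,b) \<in> {(1,0),(-1,0),(0,1),(0,-1),(1,-1),(-1,1)}" for a b :: int
    using that by auto
  have s1: "(a1,b1) \<in> {(1,0),(-1,0),(0,1),(0,-1),(1,-1),(-1,1)}"
  proof -
    have "(m - m', n - n') \<in> {(1,0),(-1,0),(0,1),(0,-1),(1,-1),(-1,1)}"
      using d1 unfolding i j dist_lp .
    from neg[OF this] show ?thesis unfolding a1_def b1_def by simp
  qed
  have s2: "(a2,b2) \<in> {(1,0),(-1,0),(0,1),(0,-1),(1,-1),(-1,1)}"
    using d3 unfolding i k dist_lp a2_def b2_def .
  have s3: "(a2-a1,b2-b1) \<in> {(1,0),(-1,0),(0,1),(0,-1),(1,-1),(-1,1)}"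
  proof -
    have "(m' - m'', n' - n'') \<in> {(1,0),(-1,0),(0,1),(0,-1),(1,-1),(-1,1)}"
      using d2 unfolding j k dist_lp .
    from neg[OF this] show ?thesis unfolding a1_def b1_def a2_def b2_def by simp
  qed
  have c1: "(a1 - b1) mod 3 = 1" using i(2) j(2) unfolding a1_def b1_def by presburger
  have c2: "(a2 - b2) mod 3 = 2" using i(2) k(2) unfolding a2_def b2_def by presburger
  have s1': "(a1,b1) \<in> {(1,0),(0,-1),(-1,1)}"
    using s1 c1 by (elim insertE emptyE) auto
  have s2': "(a2,b2) \<in> {(-1,0),(0,1),(1,-1)}"
    using s2 c2 by (elim insertE emptyE) auto
  have m': "m' = m + a1" "n' = n + b1" "m'' = m + a2" "n'' = n + b2"
    unfolding a1_def b1_def a2_def b2_def by auto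
  from six_tri[OF s1' s2' s3] show ?thesis
  proof (elim insertE emptyE)
    assume "(a1, b1, a2, b2) = (1, 0, 0, 1)"
    moreover have "(m - n) mod 3 = 0" using i(2) by presburger
    ultimately have "t = triF m n True" by (simp add: t i j k m' triF_def)
    then show ?thesis by blast
  next
    assume "(a1, b1, a2, b2) = (1, 0, 1, -1)"
    moreover have "(m - (n - 1)) mod 3 = 1" using i(2) by presburger
    ultimately have "t = triF m (n-1) False" by (simp add: t i j k m' triF_def)
    then show ?thesis by blast
  next
    assume "(a1, b1, a2, b2) = (0, -1, 1, -1)"
    moreover have "(m - (n - 1)) mod 3 = 1" using i(2) by presburger
    ultimately have "t = triF m (n-1) True" by (simp add: t i j k m' triF_def)
    then show ?thesis by blast
  next
    assume "(a1, b1, a2, b2) = (0, -1, -1, 0)"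
    moreover have "(m - 1 - (n - 1)) mod 3 = 0" using i(2) by presburger
    ultimately have "t = triF (m-1) (n-1) False" by (simp add: t i j k m' triF_def)
    then show ?thesis by blast
  next
    assume "(a1, b1, a2, b2) = (-1, 1, -1, 0)"
    moreover have "(m - 1 - n) mod 3 = 2" using i(2) by presburger
    ultimately have "t = triF (m-1) n True" by (simp add: t i j k m' triF_def)
    then show ?thesis by blast
  next
    assume "(a1, b1, a2, b2) = (-1, 1, 0, 1)"
    moreover have "(m - 1 - n) mod 3 = 2" using i(2) by presburger
    ultimately have "t = triF (m-1) n False" by (simp add: t i j k m' triF_def)
    then show ?thesis by blast
  qed
qed

lemma Tri_iff: "t \<in> Tri \<longleftrightarrow> (\<exists>p q b. t = triF p q b)"
  using Tri_imp_triF Tri_triF by blast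


definition Oup :: "real \<Rightarrow> int \<Rightarrow> int \<Rightarrow> pt set" where
  "Oup \<epsilon> p q = {y. inner aA y > \<epsilon> * p} \<inter> {y. inner aB y > \<epsilon> * q} \<inter> {y. inner (aA + aB) y < \<epsilon> * (p + q + 1)}"
definition Odn :: "real \<Rightarrow> int \<Rightarrow> int \<Rightarrow> pt set" where
  "Odn \<epsilon> p q = {y. inner aA y < \<epsilon> * (p + 1)} \<inter> {y. inner aB y < \<epsilon> * (q + 1)} \<inter> {y. inner (aA + aB) y > \<epsilon> * (p + q + 1)}"

lemma aA_nz: "aA \<noteq> 0" by (simp add: aA_def zero_prod_def)
lemma aB_nz: "aB \<noteq> 0" by (simp add: aB_def zero_prod_def)
lemma aAB_nz: "aA + aB \<noteq> 0" by (simp add: aA_def aB_def zero_prod_def)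

lemma hull_up: assumes e: "\<epsilon> \<ge> 0" shows "convex hull ((\<lambda>v. \<epsilon> *\<^sub>R v) ` vset p q True) \<subseteq>
   {y. inner aA y \<ge> \<epsilon> * p} \<inter> {y. inner aB y \<ge> \<epsilon> * q} \<inter> {y. inner (aA + aB) y \<le> \<epsilon> * (p + q + 1)}"
proof (rule hull_minimal)
  show "convex ({y. inner aA y \<ge> \<epsilon> * p} \<inter> {y. inner aB y \<ge> \<epsilon> * q} \<inter> {y. inner (aA + aB) y \<le> \<epsilon> * (p + q + 1)})"
    by (intro convex_Int convex_halfspace_le convex_halfspace_ge)
qed (use e in \<open>auto simp: vset_def inner_add_left algebra_simps\<close>)

lemma hull_dn: assumes e: "\<epsilon> \<ge> 0" shows "convex hull ((\<lambda>v. \<epsilon> *\<^sub>R v) ` vset p q False) \<subseteq>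
   {y. inner aA y \<le> \<epsilon> * (p + 1)} \<inter> {y. inner aB y \<le> \<epsilon> * (q + 1)} \<inter> {y. inner (aA + aB) y \<ge> \<epsilon> * (p + q + 1)}"
proof (rule hull_minimal)
  show "convex ({y. inner aA y \<le> \<epsilon> * (p + 1)} \<inter> {y. inner aB y \<le> \<epsilon> * (q + 1)} \<inter> {y. inner (aA + aB) y \<ge> \<epsilon> * (p + q + 1)})"
    by (intro convex_Int convex_halfspace_le convex_halfspace_ge)
qed (use e in \<open>auto simp: vset_def inner_add_left algebra_simps\<close>)

lemma int_up_sub: assumes e: "\<epsilon> \<ge> 0" shows "interior (tri_set \<epsilon> (triF p q True)) \<subseteq> Oup \<epsilon> p q"
proof -
  have "interior (tri_set \<epsilon> (triF p q True)) \<subseteq> interior ({y. inner aA y \<ge> \<epsilon> * p} \<inter> {y. inner aB y \<ge> \<epsilon> * q} \<inter> {y. inner (aA + aB) y \<le> \<epsilon> * (p + q + 1)})"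
    unfolding tri_set_triF by (rule interior_mono[OF hull_up[OF e]])
  also have "\<dots> = Oup \<epsilon> p q"
    unfolding interior_Int Oup_def using aA_nz aB_nz aAB_nz by simp
  finally show ?thesis .
qed

lemma int_dn_sub: assumes e: "\<epsilon> \<ge> 0" shows "interior (tri_set \<epsilon> (triF p q False)) \<subseteq> Odn \<epsilon> p q"
proof -
  have "interior (tri_set \<epsilon> (triF p q False)) \<subseteq> interior ({y. inner aA y \<le> \<epsilon> * (p + 1)} \<inter> {y. inner aB y \<le> \<epsilon> * (q + 1)} \<inter> {y. inner (aA + aB) y \<ge> \<epsilon> * (p + q + 1)})"
    unfolding tri_set_triF by (rule interior_mono[OF hull_dn[OF e]])
  also have "\<dots> = Odn \<epsilon> p q"
    unfolding interior_Int Odn_def using aA_nz aB_nz aAB_nz by simp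
  finally show ?thesis .
qed

lemma open_Oup: "open (Oup \<epsilon> p q)"
  unfolding Oup_def by (intro open_Int open_halfspace_lt open_halfspace_gt)
lemma open_Odn: "open (Odn \<epsilon> p q)"
  unfolding Odn_def by (intro open_Int open_halfspace_lt open_halfspace_gt)

lemma pt_decomp: obtains a b where "y = (a + b/2, b * sqrt 3 / 2)" "inner aA y = a" "inner aB y = b"
  using lp_recon[of y] by metis

lemma comb3: "u *\<^sub>R (\<epsilon> *\<^sub>R lp m n) + v *\<^sub>R (\<epsilon> *\<^sub>R lp m' n') + w *\<^sub>R (\<epsilon> *\<^sub>R lp m'' n'') =
  (\<epsilon> * (u * m + v * m' + w * m'') + \<epsilon> * (u * n + v * n' + w * n'') / 2, \<epsilon> * (u * n + v * n' + w * n'') * sqrt 3 / 2)"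
  by (simp add: lp_def) (simp add: field_simps)

lemma Oup_sub: assumes e: "\<epsilon> > 0" shows "Oup \<epsilon> p q \<subseteq> tri_set \<epsilon> (triF p q True)"
proof
  fix y assume y: "y \<in> Oup \<epsilon> p q"
  obtain a b where yab: "y = (a + b/2, b * sqrt 3 / 2)" "inner aA y = a" "inner aB y = b"
    by (rule pt_decomp)
  define \<alpha> where "\<alpha> = a / \<epsilon> - p"
  define \<beta> where "\<beta> = b / \<epsilon> - q"
  have a: "a = \<epsilon> * (p + \<alpha>)" and b: "b = \<epsilon> * (q + \<beta>)" using e by (simp_all add: \<alpha>_def \<beta>_def)
  have h: "\<epsilon> * p < \<epsilon> * (p + \<alpha>)" "\<epsilon> * q < \<epsilon> * (q + \<beta>)" "\<epsilon> * (p + \<alpha>) + \<epsilon> * (q + \<beta>) < \<epsilon> * (p + q + 1)"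
    using y yab unfolding a b by (auto simp: Oup_def inner_add_left)
  have h': "\<epsilon> * 0 < \<epsilon> * \<alpha>" "\<epsilon> * 0 < \<epsilon> * \<beta>" "\<epsilon> * (\<alpha> + \<beta>) < \<epsilon> * 1"
    using h by (simp_all add: algebra_simps)
  have pos: "\<alpha> \<ge> 0" "\<beta> \<ge> 0" "1 - \<alpha> - \<beta> \<ge> 0"
    using h'[unfolded mult_less_cancel_left_pos[OF e]] by simp_all
  have eq: "y = (1 - \<alpha> - \<beta>) *\<^sub>R (\<epsilon> *\<^sub>R lp p q) + \<alpha> *\<^sub>R (\<epsilon> *\<^sub>R lp (p+1) q) + \<beta> *\<^sub>R (\<epsilon> *\<^sub>R lp p (q+1))"
    unfolding comb3 yab(1) a b by (simp add: algebra_simps)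
  have im: "(\<lambda>v. \<epsilon> *\<^sub>R v) ` vset p q True = {\<epsilon> *\<^sub>R lp p q, \<epsilon> *\<^sub>R lp (p+1) q, \<epsilon> *\<^sub>R lp p (q+1)}" by (simp add: vset_def)
  show "y \<in> tri_set \<epsilon> (triF p q True)"
    unfolding tri_set_triF im convex_hull_3 mem_Collect_eq
    by (rule exI[of _ "1 - \<alpha> - \<beta>"], rule exI[of _ "\<alpha>"], rule exI[of _ "\<beta>"]) (use pos eq in simp)
qed

lemma Odn_sub: assumes e: "\<epsilon> > 0" shows "Odn \<epsilon> p q \<subseteq> tri_set \<epsilon> (triF p q False)"
proof
  fix y assume y: "y \<in> Odn \<epsilon> p q"
  obtain a b where yab: "y = (a + b/2, b * sqrt 3 / 2)" "inner aA y = a" "inner aB y = b"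
    by (rule pt_decomp)
  define \<alpha> where "\<alpha> = p + 1 - a / \<epsilon>"
  define \<beta> where "\<beta> = q + 1 - b / \<epsilon>"
  have a: "a = \<epsilon> * (p + 1 - \<alpha>)" and b: "b = \<epsilon> * (q + 1 - \<beta>)" using e by (simp_all add: \<alpha>_def \<beta>_def)
  have h: "\<epsilon> * (p + 1 - \<alpha>) < \<epsilon> * (p + 1)" "\<epsilon> * (q + 1 - \<beta>) < \<epsilon> * (q + 1)"
     "\<epsilon> * (p + 1 - \<alpha>) + \<epsilon> * (q + 1 - \<beta>) > \<epsilon> * (p + q + 1)"
    using y yab unfolding a b by (auto simp: Odn_def inner_add_left)
  have h': "\<epsilon> * 0 < \<epsilon> * \<alpha>" "\<epsilon> * 0 < \<epsilon> * \<beta>" "\<epsilon> * (\<alpha> + \<beta>) < \<epsilon> * 1"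
    using h by (simp_all add: algebra_simps)
  have pos: "\<beta> \<ge> 0" "\<alpha> \<ge> 0" "1 - \<alpha> - \<beta> \<ge> 0"
    using h'[unfolded mult_less_cancel_left_pos[OF e]] by simp_all
  have eq: "y = \<beta> *\<^sub>R (\<epsilon> *\<^sub>R lp (p+1) q) + \<alpha> *\<^sub>R (\<epsilon> *\<^sub>R lp p (q+1)) + (1 - \<alpha> - \<beta>) *\<^sub>R (\<epsilon> *\<^sub>R lp (p+1) (q+1))"
    unfolding comb3 yab(1) a b by (simp add: algebra_simps)
  have im: "(\<lambda>v. \<epsilon> *\<^sub>R v) ` vset p q False = {\<epsilon> *\<^sub>R lp (p+1) q, \<epsilon> *\<^sub>R lp p (q+1), \<epsilon> *\<^sub>R lp (p+1) (q+1)}" by (simp add: vset_def)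
  show "y \<in> tri_set \<epsilon> (triF p q False)"
    unfolding tri_set_triF im convex_hull_3 mem_Collect_eq
    by (rule exI[of _ "\<beta>"], rule exI[of _ "\<alpha>"], rule exI[of _ "1 - \<alpha> - \<beta>"]) (use pos eq in simp)
qed

lemma interior_up: "\<epsilon> > 0 \<Longrightarrow> interior (tri_set \<epsilon> (triF p q True)) = Oup \<epsilon> p q"
  using int_up_sub[of \<epsilon>] interior_maximal[OF Oup_sub open_Oup] by fastforce
lemma interior_dn: "\<epsilon> > 0 \<Longrightarrow> interior (tri_set \<epsilon> (triF p q False)) = Odn \<epsilon> p q"
  using int_dn_sub[of \<epsilon>] interior_maximal[OF Odn_sub open_Odn] by fastforce

lemma floor_div: fixes a \<epsilon> :: real assumes e: "\<epsilon> > 0" and "\<epsilon> * p \<le> a" "a < \<epsilon> * (p + 1)"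
  shows "\<lfloor>a / \<epsilon>\<rfloor> = p"
proof (rule floor_unique)
  show "of_int p \<le> a / \<epsilon>" using assms by (simp add: pos_le_divide_eq mult.commute)
  show "a / \<epsilon> < of_int p + 1" using assms by (simp add: pos_divide_less_eq mult.commute)
qed
lemma sum_div: fixes a c \<epsilon> :: real assumes e: "\<epsilon> > 0" shows "a / \<epsilon> + c / \<epsilon> < r \<longleftrightarrow> a + c < \<epsilon> * r"
  using e by (simp add: add_divide_distrib[symmetric] pos_divide_less_eq mult.commute)

definition tri_of :: "real \<Rightarrow> pt \<Rightarrow> pt \<times> pt \<times> pt" where
  "tri_of \<epsilon> x = triF \<lfloor>inner aA x / \<epsilon>\<rfloor> \<lfloor>inner aB x / \<epsilon>\<rfloor>
     (inner aA x / \<epsilon> + inner aB x / \<epsilon> < of_int \<lfloor>inner aA x / \<epsilon>\<rfloor> + of_int \<lfloor>inner aB x / \<epsilon>\<rfloor> + 1)"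

lemma tri_unique: assumes e: "\<epsilon> > 0" and t: "t \<in> Tri" and x: "x \<in> interior (tri_set \<epsilon> t)"
  shows "t = tri_of \<epsilon> x"
proof -
  obtain p q b where tb: "t = triF p q b" using t Tri_iff by blast
  obtain a c where xac: "inner aA x = a" "inner aB x = c" by blast
  show ?thesis
  proof (cases b)
    case True
    then have "x \<in> Oup \<epsilon> p q" using x interior_up[OF e, of p q] tb by simp
    then have h: "a > \<epsilon> * p" "c > \<epsilon> * q" "a + c < \<epsilon> * (p + q + 1)"
      by (auto simp: Oup_def inner_add_left xac)
    have f1: "\<lfloor>a / \<epsilon>\<rfloor> = p" using h by (intro floor_div[OF e]) (auto simp: algebra_simps)
    have f2: "\<lfloor>c / \<epsilon>\<rfloor> = q" using h by (intro floor_div[OF e]) (auto simp: algebra_simps)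
    have f3: "a / \<epsilon> + c / \<epsilon> < p + q + 1" using h sum_div[OF e] by simp
    show ?thesis unfolding tri_of_def xac f1 f2 tb using f3 True by simp
  next
    case False
    then have "x \<in> Odn \<epsilon> p q" using x interior_dn[OF e, of p q] tb by simp
    then have h: "a < \<epsilon> * (p + 1)" "c < \<epsilon> * (q + 1)" "a + c > \<epsilon> * (p + q + 1)"
      by (auto simp: Odn_def inner_add_left xac)
    have f1: "\<lfloor>a / \<epsilon>\<rfloor> = p" using h by (intro floor_div[OF e]) (auto simp: algebra_simps)
    have f2: "\<lfloor>c / \<epsilon>\<rfloor> = q" using h by (intro floor_div[OF e]) (auto simp: algebra_simps)
    have f3: "\<not> (a / \<epsilon> + c / \<epsilon> < p + q + 1)" using h sum_div[OF e, of a c "p+q+1"] by simp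
    show ?thesis unfolding tri_of_def xac f1 f2 tb using f3 False by simp
  qed
qed

lemma chi_eq: assumes e: "\<epsilon> > 0" and t: "t \<in> Tri" and x: "x \<in> interior (tri_set \<epsilon> t)"
  shows "chi \<epsilon> u x = chiT \<epsilon> u t"
proof -
  have ex: "\<exists>t\<in>Tri. x \<in> interior (tri_set \<epsilon> t)" using t x by blast
  define s where "s = (SOME t. t \<in> Tri \<and> x \<in> interior (tri_set \<epsilon> t))"
  have "s \<in> Tri \<and> x \<in> interior (tri_set \<epsilon> s)" unfolding s_def by (rule someI[of _ t]) (use t x in blast)
  then have "s = t" using tri_unique[OF e] t x by metis
  then show ?thesis unfolding chi_def using ex s_def by simp
qed

lemma tri_of_generic: assumes e: "\<epsilon> > 0"
  and g: "inner aA x / \<epsilon> \<notin> \<int>" "inner aB x / \<epsilon> \<notin> \<int>" "inner aA x / \<epsilon> + inner aB x / \<epsilon> \<notin> \<int>"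
  shows "x \<in> interior (tri_set \<epsilon> (tri_of \<epsilon> x))"
proof -
  obtain a c where xac: "inner aA x = a" "inner aB x = c" by blast
  define p where "p = \<lfloor>a / \<epsilon>\<rfloor>"
  define q where "q = \<lfloor>c / \<epsilon>\<rfloor>"
  have fl: "of_int p < a / \<epsilon>" "a / \<epsilon> < p + 1" "of_int q < c / \<epsilon>" "c / \<epsilon> < q + 1"
    using g xac unfolding p_def q_def
    by (metis Ints_of_int of_int_floor_le order_le_neq_trans, linarith,
        metis Ints_of_int of_int_floor_le order_le_neq_trans, linarith)
  have fl': "\<epsilon> * p < a" "a < \<epsilon> * (p + 1)" "\<epsilon> * q < c" "c < \<epsilon> * (q + 1)"
    using fl e by (simp_all add: pos_less_divide_eq pos_divide_less_eq mult.commute)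
  show ?thesis
  proof (cases "a / \<epsilon> + c / \<epsilon> < p + q + 1")
    case True
    then have "a + c < \<epsilon> * (p + q + 1)" using sum_div[OF e] by simp
    then have "x \<in> Oup \<epsilon> p q" using fl' by (auto simp: Oup_def inner_add_left xac)
    then show ?thesis unfolding tri_of_def xac p_def[symmetric] q_def[symmetric] using True interior_up[OF e] by simp
  next
    case False
    have "a / \<epsilon> + c / \<epsilon> \<noteq> of_int (p + q + 1)" using g(3) xac by (metis Ints_of_int)
    then have "a / \<epsilon> + c / \<epsilon> > p + q + 1" using False by simp
    then have "(a + c) / \<epsilon> > p + q + 1" by (simp add: add_divide_distrib)
    then have "a + c > \<epsilon> * (p + q + 1)" using e by (simp add: pos_less_divide_eq mult.commute)
    then have "x \<in> Odn \<epsilon> p q" using fl' by (auto simp: Odn_def inner_add_left xac)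
    then show ?thesis unfolding tri_of_def xac p_def[symmetric] q_def[symmetric] using False interior_dn[OF e] by simp
  qed
qed

lemma abs_inner_le: "\<bar>inner aA y\<bar> \<le> 2 * norm y" "\<bar>inner aB y\<bar> \<le> 2 * norm y"
proof -
  obtain y1 y2 where y: "y = (y1, y2)" by fastforce
  have n1: "\<bar>y1\<bar> \<le> norm y" "\<bar>y2\<bar> \<le> norm y" using norm_fst_le[of y1 y2] norm_snd_le[of y2 y1] y by auto
  have s3: "1 \<le> sqrt (3::real)" by simp
  have d: "\<bar>y2\<bar> / sqrt 3 \<le> \<bar>y2\<bar>"
    using divide_left_mono[OF s3, of "\<bar>y2\<bar>"] by simp
  have "inner aA y = y1 - y2 / sqrt 3" by (simp add: aA_def y inner_prod_def)
  then have "\<bar>inner aA y\<bar> \<le> \<bar>y1\<bar> + \<bar>y2\<bar> / sqrt 3"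
    using abs_triangle_ineq4[of y1 "y2 / sqrt 3"] by (simp add: abs_divide)
  then show "\<bar>inner aA y\<bar> \<le> 2 * norm y" using n1 d by linarith
  have "inner aB y = 2 * (y2 / sqrt 3)" by (simp add: aB_def y inner_prod_def)
  then have "\<bar>inner aB y\<bar> = 2 * (\<bar>y2\<bar> / sqrt 3)" by (simp add: abs_mult abs_divide)
  then show "\<bar>inner aB y\<bar> \<le> 2 * norm y" using n1 d by linarith
qed

lemma finite_TriIn: assumes e: "\<epsilon> > 0" and b: "A \<subseteq> cball 0 R" shows "finite (TriIn \<epsilon> A)"
proof -
  define M where "M = \<lceil>2 * R / \<epsilon>\<rceil> + 1"
  have "TriIn \<epsilon> A \<subseteq> (\<lambda>(p,q,b). triF p q b) ` ({-M..M} \<times> {-M..M} \<times> UNIV)"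
  proof
    fix t assume t: "t \<in> TriIn \<epsilon> A"
    then obtain p q b where tb: "t = triF p q b" using Tri_iff TriIn_def by auto
    have "lp (p+1) q \<in> vset p q b" by (simp add: vset_def)
    then have "\<epsilon> *\<^sub>R lp (p+1) q \<in> tri_set \<epsilon> t" unfolding tb tri_set_triF by (intro hull_inc) auto
    then have "\<epsilon> *\<^sub>R lp (p+1) q \<in> cball 0 R" using t b TriIn_def by auto
    then have nr: "norm (\<epsilon> *\<^sub>R lp (p+1) q) \<le> R" by simp
    have h1: "\<bar>\<epsilon> * (p+1)\<bar> \<le> 2 * R" using abs_inner_le(1)[of "\<epsilon> *\<^sub>R lp (p+1) q"] nr by simp
    have h2: "\<bar>\<epsilon> * q\<bar> \<le> 2 * R" using abs_inner_le(2)[of "\<epsilon> *\<^sub>R lp (p+1) q"] nr by simp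
    have "\<epsilon> * \<bar>real_of_int (p+1)\<bar> \<le> 2 * R" using h1 e by (simp add: abs_mult)
    then have "\<bar>real_of_int (p+1)\<bar> \<le> 2 * R / \<epsilon>" using e by (simp add: pos_le_divide_eq mult.commute)
    then have "\<bar>p+1\<bar> \<le> \<lceil>2 * R / \<epsilon>\<rceil>" by linarith
    moreover have "\<epsilon> * \<bar>real_of_int q\<bar> \<le> 2 * R" using h2 e by (simp add: abs_mult)
    then have "\<bar>real_of_int q\<bar> \<le> 2 * R / \<epsilon>" using e by (simp add: pos_le_divide_eq mult.commute)
    then have "\<bar>q\<bar> \<le> \<lceil>2 * R / \<epsilon>\<rceil>" by linarith
    ultimately show "t \<in> (\<lambda>(p,q,b). triF p q b) ` ({-M..M} \<times> {-M..M} \<times> UNIV)"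
      unfolding M_def tb by (intro image_eqI[of _ _ "(p,q,b)"]) auto
  qed
  then show ?thesis by (rule finite_subset) auto
qed


lemma Lat_eq: "Lat = {lp m n | m n. True}"
proof -
  have "of_int a *\<^sub>R e1 + of_int b *\<^sub>R e2 = lp a b" for a b
    by (simp add: e1_def e2_def lp_def)
  then show ?thesis unfolding Lat_def by auto
qed

lemma Lat1_sub: "Lat1 \<subseteq> Lat" unfolding Lat1_eq Lat_eq by auto
lemma Lat2_sub: "Lat2 \<subseteq> Lat" unfolding Lat2_eq Lat_eq by auto
lemma Lat3_sub: "Lat3 \<subseteq> Lat" unfolding Lat3_eq Lat_eq by auto

lemma Tri_verts: "(i,j,k) \<in> Tri \<Longrightarrow> i \<in> Lat \<and> j \<in> Lat \<and> k \<in> Lat"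
  unfolding Tri_def using Lat1_sub Lat2_sub Lat3_sub by auto

lemma Ftri_nonneg: "\<epsilon> \<ge> 0 \<Longrightarrow> Ftri \<epsilon> u t \<ge> 0"
  by (cases t) (auto simp: Ftri_def)

lemma Fen_nonneg: "\<epsilon> \<ge> 0 \<Longrightarrow> Fen \<epsilon> u A \<ge> 0"
  unfolding Fen_def by (intro sum_nonneg Ftri_nonneg)

lemma tri_set_nonempty: "\<exists>y. y \<in> tri_set \<epsilon> t"
  by (cases t) (auto simp: tri_set_def intro: hull_inc)

lemma TriIn_mono: "A \<subseteq> B \<Longrightarrow> TriIn \<epsilon> A \<subseteq> TriIn \<epsilon> B"
  unfolding TriIn_def by auto

lemma TriIn_disj: "A \<inter> B = {} \<Longrightarrow> TriIn \<epsilon> A \<inter> TriIn \<epsilon> B = {}"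
  unfolding TriIn_def using tri_set_nonempty by blast

lemma Fen_mono: assumes e: "\<epsilon> \<ge> 0" and f: "finite (TriIn \<epsilon> B)" and s: "A \<subseteq> B"
  shows "Fen \<epsilon> u A \<le> Fen \<epsilon> u B"
  unfolding Fen_def using f TriIn_mono[OF s] by (intro sum_mono2) (auto intro: Ftri_nonneg[OF e])

lemma Fen_sum_disj: assumes e: "\<epsilon> \<ge> 0" and f: "finite (TriIn \<epsilon> B)" and I: "finite I"
  and s: "\<And>k. k \<in> I \<Longrightarrow> A k \<subseteq> B"
  and d: "\<And>k l. k \<in> I \<Longrightarrow> l \<in> I \<Longrightarrow> k \<noteq> l \<Longrightarrow> A k \<inter> A l = {}"
  shows "(\<Sum>k\<in>I. Fen \<epsilon> u (A k)) \<le> Fen \<epsilon> u B"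
proof -
  have fk: "finite (TriIn \<epsilon> (A k))" if "k \<in> I" for k using finite_subset[OF TriIn_mono[OF s[OF that]] f] .
  have "(\<Sum>k\<in>I. Fen \<epsilon> u (A k)) = sum (Ftri \<epsilon> u) (\<Union>k\<in>I. TriIn \<epsilon> (A k))"
    unfolding Fen_def using I fk TriIn_disj[OF d] by (subst sum.UNION_disjoint) auto
  also have "\<dots> \<le> sum (Ftri \<epsilon> u) (TriIn \<epsilon> B)"
    using f TriIn_mono[OF s] by (intro sum_mono2) (auto intro: Ftri_nonneg[OF e])
  finally show ?thesis unfolding Fen_def .
qed

lemma Fen_two_disj: assumes e: "\<epsilon> \<ge> 0" and f: "finite (TriIn \<epsilon> B)"
  and s: "A \<subseteq> B" "C \<subseteq> B" and d: "A \<inter> C = {}"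
  shows "Fen \<epsilon> u A + Fen \<epsilon> u C \<le> Fen \<epsilon> u B"
proof -
  have "(\<Sum>k\<in>{True, False}. Fen \<epsilon> u (if k then A else C)) \<le> Fen \<epsilon> u B"
    using d s by (intro Fen_sum_disj[OF e f]) auto
  then show ?thesis by simp
qed

section \<open>Transfer under lattice translations and scaling\<close>

definition shiftT :: "pt \<Rightarrow> pt \<times> pt \<times> pt \<Rightarrow> pt \<times> pt \<times> pt" where
  "shiftT w t = (case t of (i, j, k) \<Rightarrow> (i + w, j + w, k + w))"

lemma shiftT_triF: assumes "m mod 3 = n mod 3"
  shows "shiftT (lp m n) (triF p q b) = triF (p + m) (q + n) b"
proof -
  have "(p + m - (q + n)) mod 3 = (p - q) mod 3" using assms by presburger
  then show ?thesis by (simp add: triF_def Let_def shiftT_def lp_add algebra_simps)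
qed

lemma shiftT_Tri: assumes w: "w \<in> Lat1" and t: "t \<in> Tri" shows "shiftT w t \<in> Tri"
proof -
  obtain m n where w': "w = lp m n" "m mod 3 = n mod 3" using w unfolding Lat1_eq by blast
  obtain p q b where "t = triF p q b" using t Tri_iff by auto
  then show ?thesis using shiftT_triF[OF w'(2)] w'(1) Tri_triF by simp
qed

lemma neg_Lat1: "w \<in> Lat1 \<Longrightarrow> - w \<in> Lat1"
proof -
  assume "w \<in> Lat1"
  then obtain m n where w': "w = lp m n" "m mod 3 = n mod 3" unfolding Lat1_eq by blast
  have "- w = lp (-m) (-n)" using w'(1) by (simp add: lp_def)
  moreover have "(-m) mod 3 = (-n) mod 3" using w'(2) by presburger
  ultimately show "- w \<in> Lat1" unfolding Lat1_eq by auto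
qed

lemma shiftT_inv [simp]: "shiftT (- w) (shiftT w t) = t"
  by (cases t) (simp add: shiftT_def)

lemma inj_shiftT: "inj (shiftT w)"
  by (metis injI shiftT_inv)

definition aff :: "pt \<Rightarrow> real \<Rightarrow> pt \<Rightarrow> pt" where "aff c s x = c + s *\<^sub>R x"

lemma inj_aff: "s \<noteq> 0 \<Longrightarrow> inj (aff c s)"
  unfolding aff_def by (rule injI) simp

lemma interior_aff: assumes s: "s \<noteq> 0" shows "interior (aff c s ` S) = aff c s ` interior S"
proof -
  have l: "linear (\<lambda>x::pt. s *\<^sub>R x)" by (simp add: linear_scaleR)
  have i: "inj (\<lambda>x::pt. s *\<^sub>R x)" using s by (auto intro: injI)
  have "aff c s ` S = (+) c ` ((\<lambda>x. s *\<^sub>R x) ` S)" unfolding aff_def by (auto simp: image_image)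
  then have "interior (aff c s ` S) = (+) c ` ((\<lambda>x. s *\<^sub>R x) ` interior S)"
    by (simp add: interior_translation interior_injective_linear_image[OF l i])
  also have "\<dots> = aff c s ` interior S" unfolding aff_def by (auto simp: image_image)
  finally show ?thesis .
qed

lemma tri_set_shift: assumes s: "s > 0"
  shows "tri_set \<epsilon> (shiftT w t) = aff (\<epsilon> *\<^sub>R w) s ` tri_set (\<epsilon> / s) t"
proof -
  obtain i j k where t: "t = (i,j,k)" by (metis prod_cases3)
  have e: "s * (\<epsilon> / s) = \<epsilon>" using s by simp
  have "aff (\<epsilon> *\<^sub>R w) s ` tri_set (\<epsilon> / s) t = convex hull (aff (\<epsilon> *\<^sub>R w) s ` {(\<epsilon> / s) *\<^sub>R i, (\<epsilon> / s) *\<^sub>R j, (\<epsilon> / s) *\<^sub>R k})"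
    unfolding aff_def tri_set_def t by (simp only: prod.case convex_hull_affinity)
  also have "\<dots> = tri_set \<epsilon> (shiftT w t)"
    unfolding aff_def tri_set_def t shiftT_def using e by (simp add: scaleR_add_right add.commute)
  finally show ?thesis by simp
qed

lemma TriIn_shift: assumes s: "s > 0" and w: "w \<in> Lat1"
  shows "TriIn \<epsilon> (aff (\<epsilon> *\<^sub>R w) s ` Q) = shiftT w ` TriIn (\<epsilon> / s) Q"
proof (rule set_eqI, rule iffI)
  fix t' assume t': "t' \<in> TriIn \<epsilon> (aff (\<epsilon> *\<^sub>R w) s ` Q)"
  define t where "t = shiftT (- w) t'"
  have tt: "t' = shiftT w t" unfolding t_def by (cases t') (simp add: shiftT_def)
  have "t \<in> Tri" unfolding t_def using t' neg_Lat1[OF w] shiftT_Tri TriIn_def by auto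
  moreover have "tri_set (\<epsilon> / s) t \<subseteq> Q"
  proof -
    have "tri_set \<epsilon> (shiftT w t) \<subseteq> aff (\<epsilon> *\<^sub>R w) s ` Q"
      using t' unfolding TriIn_def tt by blast
    then have "aff (\<epsilon> *\<^sub>R w) s ` tri_set (\<epsilon> / s) t \<subseteq> aff (\<epsilon> *\<^sub>R w) s ` Q"
      unfolding tri_set_shift[OF s] .
    then show ?thesis using inj_image_subset_iff[OF inj_aff[of s]] s by auto
  qed
  ultimately show "t' \<in> shiftT w ` TriIn (\<epsilon> / s) Q" unfolding tt TriIn_def by auto
next
  fix t' assume "t' \<in> shiftT w ` TriIn (\<epsilon> / s) Q"
  then obtain t where tt: "t' = shiftT w t" and t: "t \<in> Tri" "tri_set (\<epsilon> / s) t \<subseteq> Q"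
    unfolding TriIn_def by auto
  have "tri_set \<epsilon> (shiftT w t) \<subseteq> aff (\<epsilon> *\<^sub>R w) s ` Q"
    unfolding tri_set_shift[OF s] using t(2) by (rule image_mono)
  then show "t' \<in> TriIn \<epsilon> (aff (\<epsilon> *\<^sub>R w) s ` Q)"
    unfolding TriIn_def tt using t shiftT_Tri[OF w] by blast
qed

lemma Ftri_shift: assumes s: "s > 0"
  shows "Ftri (\<epsilon> / s) (\<lambda>x. u (aff (\<epsilon> *\<^sub>R w) s x)) t = Ftri \<epsilon> u (shiftT w t) / s"
proof -
  obtain i j k where t: "t = (i,j,k)" by (metis prod_cases3)
  have e: "s * (\<epsilon> / s) = \<epsilon>" using s by simp
  show ?thesis unfolding Ftri_def t shiftT_def aff_def using e
    by (simp add: scaleR_add_right add.commute)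
qed

lemma Fen_shift: assumes s: "s > 0" and w: "w \<in> Lat1"
  shows "Fen (\<epsilon> / s) (\<lambda>x. u (aff (\<epsilon> *\<^sub>R w) s x)) Q = Fen \<epsilon> u (aff (\<epsilon> *\<^sub>R w) s ` Q) / s"
  unfolding Fen_def TriIn_shift[OF s w] Ftri_shift[OF s]
  by (simp add: sum.reindex[OF inj_on_subset[OF inj_shiftT]] sum_divide_distrib)

lemma chiT_shift: assumes s: "s > 0"
  shows "chiT (\<epsilon> / s) (\<lambda>x. u (aff (\<epsilon> *\<^sub>R w) s x)) t = chiT \<epsilon> u (shiftT w t)"
proof -
  obtain i j k where t: "t = (i,j,k)" by (metis prod_cases3)
  have e: "s * (\<epsilon> / s) = \<epsilon>" using s by simp
  show ?thesis unfolding chiT_def t shiftT_def aff_def using e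
    by (simp add: scaleR_add_right add.commute)
qed

lemma chi_shift: assumes s: "s > 0" and w: "w \<in> Lat1" and e: "\<epsilon> > 0"
  shows "chi (\<epsilon> / s) (\<lambda>x. u (aff (\<epsilon> *\<^sub>R w) s x)) x = chi \<epsilon> u (aff (\<epsilon> *\<^sub>R w) s x)"
proof (cases "\<exists>t\<in>Tri. x \<in> interior (tri_set (\<epsilon> / s) t)")
  case True
  then obtain t where t: "t \<in> Tri" "x \<in> interior (tri_set (\<epsilon> / s) t)" by blast
  have e': "\<epsilon> / s > 0" using e s by simp
  have "aff (\<epsilon> *\<^sub>R w) s x \<in> interior (tri_set \<epsilon> (shiftT w t))"
    unfolding tri_set_shift[OF s] interior_aff[of s, OF less_imp_neq[OF s, symmetric]] using t by auto
  then have "chi \<epsilon> u (aff (\<epsilon> *\<^sub>R w) s x) = chiT \<epsilon> u (shiftT w t)"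
    using chi_eq[OF e shiftT_Tri[OF w t(1)]] by blast
  moreover have "chi (\<epsilon> / s) (\<lambda>x. u (aff (\<epsilon> *\<^sub>R w) s x)) x = chiT (\<epsilon> / s) (\<lambda>x. u (aff (\<epsilon> *\<^sub>R w) s x)) t"
    using chi_eq[OF e' t] .
  ultimately show ?thesis using chiT_shift[OF s] by simp
next
  case False
  have "\<not> (\<exists>t'\<in>Tri. aff (\<epsilon> *\<^sub>R w) s x \<in> interior (tri_set \<epsilon> t'))"
  proof
    assume "\<exists>t'\<in>Tri. aff (\<epsilon> *\<^sub>R w) s x \<in> interior (tri_set \<epsilon> t')"
    then obtain t' where t': "t' \<in> Tri" "aff (\<epsilon> *\<^sub>R w) s x \<in> interior (tri_set \<epsilon> t')" by blast
    define t where "t = shiftT (- w) t'"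
    have tt: "t' = shiftT w t" unfolding t_def by (cases t') (simp add: shiftT_def)
    have "t \<in> Tri" unfolding t_def using t' neg_Lat1[OF w] shiftT_Tri by auto
    moreover have "x \<in> interior (tri_set (\<epsilon> / s) t)"
      using t'(2) unfolding tt tri_set_shift[OF s] interior_aff[of s, OF less_imp_neq[OF s, symmetric]]
      using inj_image_mem_iff[OF inj_aff, of s] s by auto
    ultimately show False using False by blast
  qed
  then show ?thesis using False unfolding chi_def by simp
qed

lemma SF_shift: assumes s: "s > 0" and w: "w \<in> Lat1" and u: "u \<in> SF \<epsilon>"
  shows "(\<lambda>x. u (aff (\<epsilon> *\<^sub>R w) s x)) \<in> SF (\<epsilon> / s)"
proof -
  have e: "s * (\<epsilon> / s) = \<epsilon>" using s by simp
  obtain m n where w': "w = lp m n" using w unfolding Lat1_eq by blast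
  have "u (\<epsilon> *\<^sub>R w + s *\<^sub>R (\<epsilon> / s) *\<^sub>R x) \<in> sphere 0 1" if x: "x \<in> Lat" for x
  proof -
    obtain a b where x': "x = lp a b" using x unfolding Lat_eq by blast
    have "\<epsilon> *\<^sub>R w + s *\<^sub>R (\<epsilon> / s) *\<^sub>R x = \<epsilon> *\<^sub>R lp (m + a) (n + b)"
      using e by (simp add: w' x' lp_add[symmetric] scaleR_add_right)
    moreover have "lp (m + a) (n + b) \<in> Lat" unfolding Lat_eq by auto
    ultimately show ?thesis using u unfolding SF_def by auto
  qed
  then show ?thesis unfolding SF_def aff_def by auto
qed


lemma cross2_bound: assumes "norm v \<le> 1" "norm w \<le> 1" shows "\<bar>cross2 v w\<bar> \<le> 1"
proof -
  have "cross2 v w = inner v (snd w, - fst w)" by (simp add: cross2_def inner_prod_def)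
  moreover have "norm (snd w, - fst w) = norm w"
    by (simp add: norm_Pair norm_prod_def add.commute)
  ultimately have "\<bar>cross2 v w\<bar> \<le> norm v * norm w" using Cauchy_Schwarz_ineq2[of v "(snd w, - fst w)"] by simp
  also have "\<dots> \<le> 1" using assms by (simp add: mult_le_one)
  finally show ?thesis .
qed

lemma chiT_bound: assumes u: "u \<in> SF \<epsilon>" and t: "t \<in> Tri" shows "\<bar>chiT \<epsilon> u t\<bar> \<le> 2"
proof -
  obtain i j k where tt: "t = (i,j,k)" by (metis prod_cases3)
  have v: "i \<in> Lat" "j \<in> Lat" "k \<in> Lat" using Tri_verts t tt by auto
  have n: "norm (u (\<epsilon> *\<^sub>R i)) \<le> 1" "norm (u (\<epsilon> *\<^sub>R j)) \<le> 1" "norm (u (\<epsilon> *\<^sub>R k)) \<le> 1"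
    using u v unfolding SF_def by auto
  have c: "\<bar>cross2 (u (\<epsilon> *\<^sub>R i)) (u (\<epsilon> *\<^sub>R j)) + cross2 (u (\<epsilon> *\<^sub>R j)) (u (\<epsilon> *\<^sub>R k)) + cross2 (u (\<epsilon> *\<^sub>R k)) (u (\<epsilon> *\<^sub>R i))\<bar> \<le> 3"
    using cross2_bound[OF n(1) n(2)] cross2_bound[OF n(2) n(3)] cross2_bound[OF n(3) n(1)] by linarith
  define X where "X = cross2 (u (\<epsilon> *\<^sub>R i)) (u (\<epsilon> *\<^sub>R j)) + cross2 (u (\<epsilon> *\<^sub>R j)) (u (\<epsilon> *\<^sub>R k)) + cross2 (u (\<epsilon> *\<^sub>R k)) (u (\<epsilon> *\<^sub>R i))"
  have s: "2 / (3 * sqrt 3) * 3 \<le> (2::real)" by (simp add: field_simps)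
  have "chiT \<epsilon> u t = 2 / (3 * sqrt 3) * X" unfolding chiT_def tt X_def by simp
  then have "\<bar>chiT \<epsilon> u t\<bar> = 2 / (3 * sqrt 3) * \<bar>X\<bar>" by (simp add: abs_mult)
  also have "\<dots> \<le> 2 / (3 * sqrt 3) * 3" using c unfolding X_def[symmetric] by (intro mult_left_mono) auto
  finally show ?thesis using s by linarith
qed

lemma chi_bound: assumes u: "u \<in> SF \<epsilon>" shows "\<bar>chi \<epsilon> u x\<bar> \<le> 2"
proof (cases "\<exists>t\<in>Tri. x \<in> interior (tri_set \<epsilon> t)")
  case True
  then have "(SOME t. t \<in> Tri \<and> x \<in> interior (tri_set \<epsilon> t)) \<in> Tri" by (metis (mono_tags, lifting) someI_ex)
  then show ?thesis using True chiT_bound[OF u] unfolding chi_def by simp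
qed (simp add: chi_def)

lemma chi_meas: assumes e: "\<epsilon> > 0" shows "chi \<epsilon> u \<in> borel_measurable borel"
proof (rule borel_measurableI)
  fix S :: "real set" assume "open S"
  define G where "G = \<Union>{interior (tri_set \<epsilon> t) | t. t \<in> Tri \<and> chiT \<epsilon> u t \<in> S}"
  define Z where "Z = - \<Union>{interior (tri_set \<epsilon> t) | t. t \<in> Tri}"
  have "chi \<epsilon> u -` S = G \<union> (if 0 \<in> S then Z else {})"
  proof (rule set_eqI)
    fix x show "x \<in> chi \<epsilon> u -` S \<longleftrightarrow> x \<in> G \<union> (if 0 \<in> S then Z else {})"
    proof (cases "\<exists>t\<in>Tri. x \<in> interior (tri_set \<epsilon> t)")
      case True
      then obtain t where t: "t \<in> Tri" "x \<in> interior (tri_set \<epsilon> t)" by blast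
      have "x \<in> G \<longleftrightarrow> chiT \<epsilon> u t \<in> S"
      proof
        assume "x \<in> G"
        then obtain t' where "t' \<in> Tri" "chiT \<epsilon> u t' \<in> S" "x \<in> interior (tri_set \<epsilon> t')" unfolding G_def by blast
        then show "chiT \<epsilon> u t \<in> S" using tri_unique[OF e] t by metis
      next
        assume "chiT \<epsilon> u t \<in> S" then show "x \<in> G" unfolding G_def using t by blast
      qed
      moreover have "x \<notin> Z" unfolding Z_def using t by blast
      ultimately show ?thesis using chi_eq[OF e t] by simp
    next
      case False
      then have "x \<notin> G" "x \<in> Z" unfolding G_def Z_def by blast+
      then show ?thesis using False unfolding chi_def by simp
    qed
  qed
  moreover have "G \<in> sets borel" unfolding G_def by (intro borel_open open_Union) auto
  moreover have "Z \<in> sets borel" unfolding Z_def by (intro borel_closed closed_Compl open_Union) auto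
  ultimately show "chi \<epsilon> u -` S \<inter> space borel \<in> sets borel" by auto
qed

lemma chinu_meas: "chinu \<nu> \<in> borel_measurable borel"
  unfolding chinu_def by measurable

lemma chinu_bound: "\<bar>chinu \<nu> x\<bar> \<le> 1" by (simp add: chinu_def)

lemma diff_meas: "\<epsilon> > 0 \<Longrightarrow> (\<lambda>x. \<bar>chi \<epsilon> u x - chinu \<nu> x\<bar>) \<in> borel_measurable borel"
  using chi_meas chinu_meas by measurable

lemma L1_integrable: assumes e: "\<epsilon> > 0" and u: "u \<in> SF \<epsilon>" and A: "A \<in> sets borel" "bounded A"
  shows "integrable lborel (\<lambda>x. indicator A x *\<^sub>R \<bar>chi \<epsilon> u x - chinu \<nu> x\<bar>)"
proof (rule integrableI_bounded_set[where A=A and B=3])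
  show "A \<in> sets lborel" using A by simp
  show "(\<lambda>x. indicator A x *\<^sub>R \<bar>chi \<epsilon> u x - chinu \<nu> x\<bar>) \<in> borel_measurable lborel"
    using diff_meas[OF e] A by measurable
  show "emeasure lborel A < \<infinity>" using emeasure_bounded_finite[OF A(2)] .
  have "\<bar>chi \<epsilon> u x - chinu \<nu> x\<bar> \<le> 3" for x using chi_bound[OF u, of x] chinu_bound[of \<nu> x] by linarith
  then show "AE x in lborel. x \<in> A \<longrightarrow> norm (indicator A x *\<^sub>R \<bar>chi \<epsilon> u x - chinu \<nu> x\<bar>) \<le> 3"
    by (auto simp: indicator_def)
  show "AE x in lborel. x \<notin> A \<longrightarrow> indicator A x *\<^sub>R \<bar>chi \<epsilon> u x - chinu \<nu> x\<bar> = 0" by auto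
qed

lemma L1_nonneg: "L1dist A f g \<ge> 0"
  unfolding L1dist_def set_lebesgue_integral_def by (rule integral_nonneg_AE) (auto simp: indicator_def)

lemma sum_indicator_le: assumes I: "finite I" and s: "\<And>k. k \<in> I \<Longrightarrow> S k \<subseteq> Q"
  and d: "\<And>k l. k \<in> I \<Longrightarrow> l \<in> I \<Longrightarrow> k \<noteq> l \<Longrightarrow> S k \<inter> S l = {}"
  shows "(\<Sum>k\<in>I. indicator (S k) x) \<le> (indicator Q x :: real)"
proof (cases "\<exists>k\<in>I. x \<in> S k")
  case True
  then obtain k where k: "k \<in> I" "x \<in> S k" by blast
  have z: "(\<Sum>l\<in>I - {k}. indicator (S l) x) = (0::real)"
    using d k by (intro sum.neutral) (auto simp: indicator_def)
  have "(\<Sum>k\<in>I. indicator (S k) x) = indicator (S k) x + (\<Sum>l\<in>I - {k}. indicator (S l) x :: real)"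
    using I k by (simp add: sum.remove)
  then show ?thesis using z k s by (auto simp: indicator_def)
next
  case False then show ?thesis by (simp add: indicator_def)
qed

lemma L1_sum_disj: assumes e: "\<epsilon> > 0" and u: "u \<in> SF \<epsilon>" and Q: "Q \<in> sets borel" "bounded Q"
  and I: "finite I" and S: "\<And>k. k \<in> I \<Longrightarrow> S k \<in> sets borel" and s: "\<And>k. k \<in> I \<Longrightarrow> S k \<subseteq> Q"
  and d: "\<And>k l. k \<in> I \<Longrightarrow> l \<in> I \<Longrightarrow> k \<noteq> l \<Longrightarrow> S k \<inter> S l = {}"
  shows "(\<Sum>k\<in>I. L1dist (S k) (chi \<epsilon> u) (chinu \<nu>)) \<le> L1dist Q (chi \<epsilon> u) (chinu \<nu>)"
proof -
  have bS: "bounded (S k)" if "k \<in> I" for k using s[OF that] Q(2) bounded_subset by blast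
  have int: "integrable lborel (\<lambda>x. indicator (S k) x *\<^sub>R \<bar>chi \<epsilon> u x - chinu \<nu> x\<bar>)" if "k \<in> I" for k
    using L1_integrable[OF e u S[OF that] bS[OF that]] .
  have "(\<Sum>k\<in>I. L1dist (S k) (chi \<epsilon> u) (chinu \<nu>)) = integral\<^sup>L lborel (\<lambda>x. \<Sum>k\<in>I. indicator (S k) x *\<^sub>R \<bar>chi \<epsilon> u x - chinu \<nu> x\<bar>)"
    unfolding L1dist_def set_lebesgue_integral_def by (rule sym, rule Bochner_Integration.integral_sum) (rule int)
  also have "\<dots> \<le> integral\<^sup>L lborel (\<lambda>x. indicator Q x *\<^sub>R \<bar>chi \<epsilon> u x - chinu \<nu> x\<bar>)"
  proof (rule Bochner_Integration.integral_mono)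
    show "integrable lborel (\<lambda>x. \<Sum>k\<in>I. indicator (S k) x *\<^sub>R \<bar>chi \<epsilon> u x - chinu \<nu> x\<bar>)" using int by auto
    show "integrable lborel (\<lambda>x. indicator Q x *\<^sub>R \<bar>chi \<epsilon> u x - chinu \<nu> x\<bar>)" using L1_integrable[OF e u Q] .
    fix x
    have "(\<Sum>k\<in>I. indicator (S k) x *\<^sub>R \<bar>chi \<epsilon> u x - chinu \<nu> x\<bar>) = (\<Sum>k\<in>I. indicator (S k) x) * \<bar>chi \<epsilon> u x - chinu \<nu> x\<bar>"
      by (simp add: sum_distrib_right)
    also have "\<dots> \<le> indicator Q x * \<bar>chi \<epsilon> u x - chinu \<nu> x\<bar>"
      using sum_indicator_le[OF I s d, of _ x] by (intro mult_right_mono) auto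
    finally show "(\<Sum>k\<in>I. indicator (S k) x *\<^sub>R \<bar>chi \<epsilon> u x - chinu \<nu> x\<bar>) \<le> indicator Q x *\<^sub>R \<bar>chi \<epsilon> u x - chinu \<nu> x\<bar>" by simp
  qed
  finally show ?thesis unfolding L1dist_def set_lebesgue_integral_def .
qed

lemma integral_aff: fixes f :: "pt \<Rightarrow> real" assumes s: "s > 0" and f: "f \<in> borel_measurable borel"
  shows "integral\<^sup>L lborel f = s\<^sup>2 * integral\<^sup>L lborel (\<lambda>x. f (c + s *\<^sub>R x))"
proof -
  have s0: "s \<noteq> 0" using s by simp
  have [measurable]: "(\<lambda>x. c + s *\<^sub>R x) \<in> borel_measurable borel" by measurable
  show ?thesis
    by (subst lborel_affine[OF s0, of c]) (use f s in \<open>simp add: integral_density integral_distr power2_eq_square\<close>)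
qed

lemma open_aff: assumes s: "s > 0" and Q: "open Q" shows "open (aff c s ` Q)"
  using interior_aff[of s c Q] s Q by (metis interior_open open_interior less_irrefl)

lemma L1_aff: assumes s: "s > 0" and Q: "open Q" and h: "h \<in> borel_measurable borel"
  shows "(LINT x:Q|lborel. h (aff c s x)) = (LINT y:(aff c s ` Q)|lborel. h y) / s\<^sup>2"
proof -
  have oQ: "open (aff c s ` Q)" using open_aff[OF s Q] .
  have m: "(\<lambda>y. indicator (aff c s ` Q) y *\<^sub>R h y) \<in> borel_measurable borel"
    using borel_open[OF oQ] h by measurable
  have ind: "indicator ((\<lambda>x. c + s *\<^sub>R x) ` Q) (c + s *\<^sub>R x) = (indicator Q x :: real)" for x
    using inj_image_mem_iff[OF inj_aff, of s c x Q] s unfolding aff_def indicator_def by auto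
  have "(LINT y:(aff c s ` Q)|lborel. h y) = s\<^sup>2 * (LINT x:Q|lborel. h (aff c s x))"
    unfolding set_lebesgue_integral_def
    by (subst integral_aff[OF s m, of c]) (simp add: aff_def ind)
  then show ?thesis using s by simp
qed

lemma null_hyperplane: assumes "a \<noteq> 0" shows "{x::pt. inner a x = 0} \<in> null_sets lborel"
proof -
  have "{x::pt. inner a x = 0} \<in> null_sets lebesgue"
    using negligible_hyperplane[of a 0] assms negligible_iff_null_sets by auto
  moreover have "{x::pt. inner a x = 0} \<in> sets lborel"
    by (simp add: closed_hyperplane)
  ultimately show ?thesis using null_sets_completion_iff[of "{x::pt. inner a x = 0}" lborel] by simp
qed

lemma slab_conv: assumes nu: "\<nu> \<noteq> 0" and s: "s > 0" and Q: "Q \<in> sets borel" "bounded Q"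
  and c: "(\<lambda>n. inner (c n) \<nu>) \<longlonglongrightarrow> 0"
  shows "(\<lambda>n. LINT x:Q|lborel. \<bar>chinu \<nu> (aff (c n) s x) - chinu \<nu> x\<bar>) \<longlonglongrightarrow> 0"
proof -
  define g where "g = (\<lambda>n x. indicator Q x *\<^sub>R \<bar>chinu \<nu> (aff (c n) s x) - chinu \<nu> x\<bar>)"
  define w where "w = (\<lambda>x. (2::real) * indicator Q x)"
  have m0: "(\<lambda>x. 0::real) \<in> borel_measurable lborel" by simp
  have ms: "g n \<in> borel_measurable lborel" for n
    unfolding g_def using chinu_meas[of \<nu>] Q unfolding aff_def by measurable
  have iw: "integrable lborel w"
    unfolding w_def using Q emeasure_bounded_finite[OF Q(2)] by (intro integrable_mult_right integrable_real_indicator) auto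
  have bnd: "AE x in lborel. norm (g n x) \<le> w x" for n
    unfolding g_def w_def using chinu_bound[of \<nu>] by (auto simp: indicator_def chinu_def)
  have ae: "AE x in lborel. (\<lambda>n. g n x) \<longlonglongrightarrow> 0"
  proof -
    have A: "AE x in lborel. x \<notin> {x. inner \<nu> x = 0}" by (rule AE_not_in[OF null_hyperplane[OF nu]])
    have pw: "(\<lambda>n. g n x) \<longlonglongrightarrow> 0" if x: "inner \<nu> x \<noteq> 0" for x
    proof -
      have lim: "(\<lambda>n. inner (aff (c n) s x) \<nu>) \<longlonglongrightarrow> s * inner x \<nu>"
        unfolding aff_def inner_add_left inner_scaleR_left using tendsto_add[OF c tendsto_const, of "s * inner x \<nu>"] by simp
      have "eventually (\<lambda>n. chinu \<nu> (aff (c n) s x) = chinu \<nu> x) sequentially"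
      proof (cases "inner x \<nu> > 0")
        case True
        then have "s * inner x \<nu> > 0" using s by simp
        from order_tendstoD(1)[OF lim this] show ?thesis
          by eventually_elim (use True in \<open>auto simp: chinu_def\<close>)
      next
        case False
        then have "inner x \<nu> < 0" using x by (simp add: inner_commute)
        then have "s * inner x \<nu> < 0" using s by (simp add: mult_pos_neg)
        from order_tendstoD(2)[OF lim this] show ?thesis
          by eventually_elim (use \<open>inner x \<nu> < 0\<close> in \<open>auto simp: chinu_def\<close>)
      qed
      then have "eventually (\<lambda>n. g n x = 0) sequentially" unfolding g_def by eventually_elim simp
      then show ?thesis by (rule tendsto_eventually)
    qed
    show ?thesis using A by (rule AE_mp) (rule AE_I2, use pw in auto)
  qed
  have "(\<lambda>n. integral\<^sup>L lborel (g n)) \<longlonglongrightarrow> integral\<^sup>L lborel (\<lambda>x. 0::real)"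
    using Bochner_Integration.integral_dominated_convergence[OF m0 ms iw ae bnd] by simp
  then show ?thesis unfolding set_lebesgue_integral_def g_def by simp
qed


lemma unit_sq: assumes "\<nu> \<in> sphere (0::pt) 1" shows "(fst \<nu>)\<^sup>2 + (snd \<nu>)\<^sup>2 = 1"
proof -
  have "norm \<nu> = 1" using assms by simp
  then have "sqrt ((fst \<nu>)\<^sup>2 + (snd \<nu>)\<^sup>2) = 1" by (simp add: norm_prod_def)
  then show ?thesis by (metis real_sqrt_eq_1_iff)
qed

lemma rot_decomp: assumes "\<nu> \<in> sphere (0::pt) 1"
  shows "x = inner x (perp \<nu>) *\<^sub>R perp \<nu> + inner x \<nu> *\<^sub>R \<nu>"
proof -
  obtain a b where nu: "\<nu> = (a, b)" by fastforce
  obtain x1 x2 where xx: "x = (x1, x2)" by fastforce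
  have ab: "a\<^sup>2 + b\<^sup>2 = 1" using unit_sq[OF assms] nu by simp
  have "x1 = x1 * (a\<^sup>2 + b\<^sup>2)" "x2 = x2 * (a\<^sup>2 + b\<^sup>2)" using ab by simp_all
  then show ?thesis unfolding nu xx perp_def
    by (simp add: inner_prod_def power2_eq_square algebra_simps)
qed

lemma norm_perp: "norm (perp \<nu>) = norm \<nu>"
  by (simp add: perp_def norm_prod_def add.commute)

lemma inner_perp_self: "inner (perp \<nu>) \<nu> = 0"
  by (simp add: perp_def inner_prod_def)

lemma norm_le_rot: assumes "\<nu> \<in> sphere (0::pt) 1"
  shows "norm x \<le> \<bar>inner x (perp \<nu>)\<bar> + \<bar>inner x \<nu>\<bar>"
proof -
  have n: "norm \<nu> = 1" "norm (perp \<nu>) = 1" using assms norm_perp[of \<nu>] by auto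
  have "norm x = norm (inner x (perp \<nu>) *\<^sub>R perp \<nu> + inner x \<nu> *\<^sub>R \<nu>)"
    using rot_decomp[OF assms, of x] by simp
  also have "\<dots> \<le> norm (inner x (perp \<nu>) *\<^sub>R perp \<nu>) + norm (inner x \<nu> *\<^sub>R \<nu>)" by (rule norm_triangle_ineq)
  also have "\<dots> = \<bar>inner x (perp \<nu>)\<bar> + \<bar>inner x \<nu>\<bar>" using n by simp
  finally show ?thesis .
qed

lemma Sq_sub_ball: assumes "\<nu> \<in> sphere (0::pt) 1" shows "Sq \<nu> 1 \<subseteq> cball 0 1"
proof
  fix x assume "x \<in> Sq \<nu> 1"
  then have "\<bar>inner x (perp \<nu>)\<bar> < 1/2" "\<bar>inner x \<nu>\<bar> < 1/2" by (auto simp: Sq_def Rect_def)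
  then show "x \<in> cball 0 1" using norm_le_rot[OF assms, of x] by simp
qed

lemma abs_inner_unit: assumes "\<nu> \<in> sphere (0::pt) 1" shows "\<bar>inner x \<nu>\<bar> \<le> norm x"
  using Cauchy_Schwarz_ineq2[of x \<nu>] assms by simp

lemma Rect_open: "open (Rect \<nu> l h)"
proof -
  have "Rect \<nu> l h = {x. inner (perp \<nu>) x < l/2} \<inter> {x. inner (perp \<nu>) x > - (l/2)} \<inter> {x. inner \<nu> x < h/2} \<inter> {x. inner \<nu> x > - (h/2)}"
    unfolding Rect_def by (auto simp: inner_commute abs_less_iff)
  also have "open \<dots>"
    by (intro open_Int open_halfspace_lt open_halfspace_gt)
  finally show ?thesis .
qed

lemma Rect_bounded: assumes "\<nu> \<in> sphere (0::pt) 1" shows "bounded (Rect \<nu> l h)"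
proof -
  have "Rect \<nu> l h \<subseteq> cball 0 (\<bar>l\<bar> + \<bar>h\<bar>)"
  proof
    fix x assume "x \<in> Rect \<nu> l h"
    then have "\<bar>inner x (perp \<nu>)\<bar> < l/2" "\<bar>inner x \<nu>\<bar> < h/2" by (auto simp: Rect_def)
    then show "x \<in> cball 0 (\<bar>l\<bar> + \<bar>h\<bar>)" using norm_le_rot[OF assms, of x] by simp
  qed
  then show ?thesis using bounded_cball bounded_subset by blast
qed

section \<open>A competitor with bounded energy\<close>

definition cls :: "pt \<Rightarrow> int" where
  "cls y = (\<lfloor>inner aA y\<rfloor> - \<lfloor>inner aB y\<rfloor>) mod 3"

definition av :: "int \<Rightarrow> pt" where
  "av c = (if c = 0 then (1, 0) else if c = 1 then (- 1/2, sqrt 3 / 2) else (- 1/2, - sqrt 3 / 2))"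

definition gst :: "bool \<Rightarrow> int \<Rightarrow> pt" where
  "gst b c = av (if b then c else (- c) mod 3)"

definition ucomp :: "pt \<Rightarrow> real \<Rightarrow> pt \<Rightarrow> pt" where
  "ucomp \<nu> \<epsilon> y = gst (inner y \<nu> \<ge> 0) (cls ((1 / \<epsilon>) *\<^sub>R y))"

lemma cls_lp: "cls (lp m n) = (m - n) mod 3"
  by (simp add: cls_def)

lemma norm_av: "norm (av c) = 1"
  by (simp add: av_def norm_prod_def power2_eq_square)

lemma ucomp_SF: "ucomp \<nu> \<epsilon> \<in> SF \<epsilon>"
  unfolding SF_def ucomp_def gst_def using norm_av by simp

lemma Tri_cls: assumes "(i,j,k) \<in> Tri" shows "cls i = 0" "cls j = 1" "cls k = 2"
  using assms unfolding Tri_def Lat1_eq Lat2_eq Lat3_eq by (auto simp: cls_lp) presburger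

lemma gst_sum: "gst b 0 + gst b 1 + gst b 2 = 0"
  by (cases b) (simp_all add: gst_def av_def zero_prod_def)

lemma gst_chi: "2 / (3 * sqrt 3) * (cross2 (gst b 0) (gst b 1) + cross2 (gst b 1) (gst b 2) + cross2 (gst b 2) (gst b 0))
   = (if b then 1 else -1)"
proof -
  have s: "sqrt 3 * sqrt 3 = (3::real)" by simp
  show ?thesis by (cases b) (simp_all add: gst_def av_def cross2_def field_simps s)
qed

lemma ucomp_vals: assumes e: "\<epsilon> > 0" and t: "(i,j,k) \<in> Tri"
  and side: "(inner (\<epsilon> *\<^sub>R i) \<nu> \<ge> 0 \<and> inner (\<epsilon> *\<^sub>R j) \<nu> \<ge> 0 \<and> inner (\<epsilon> *\<^sub>R k) \<nu> \<ge> 0) \<or>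
              (inner (\<epsilon> *\<^sub>R i) \<nu> < 0 \<and> inner (\<epsilon> *\<^sub>R j) \<nu> < 0 \<and> inner (\<epsilon> *\<^sub>R k) \<nu> < 0)"
  shows "Ftri \<epsilon> (ucomp \<nu> \<epsilon>) (i,j,k) = 0"
    and "chiT \<epsilon> (ucomp \<nu> \<epsilon>) (i,j,k) = (if inner (\<epsilon> *\<^sub>R i) \<nu> \<ge> 0 then 1 else -1)"
proof -
  have c: "cls i = 0" "cls j = 1" "cls k = 2" using Tri_cls[OF t] by auto
  have sc: "(1 / \<epsilon>) *\<^sub>R (\<epsilon> *\<^sub>R y) = y" for y :: pt using e by simp
  define b where "b = (inner (\<epsilon> *\<^sub>R i) \<nu> \<ge> 0)"
  have vals: "ucomp \<nu> \<epsilon> (\<epsilon> *\<^sub>R i) = gst b 0" "ucomp \<nu> \<epsilon> (\<epsilon> *\<^sub>R j) = gst b 1" "ucomp \<nu> \<epsilon> (\<epsilon> *\<^sub>R k) = gst b 2"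
    using side c unfolding ucomp_def sc b_def by auto
  show "Ftri \<epsilon> (ucomp \<nu> \<epsilon>) (i,j,k) = 0" unfolding Ftri_def using vals gst_sum by simp
  show "chiT \<epsilon> (ucomp \<nu> \<epsilon>) (i,j,k) = (if inner (\<epsilon> *\<^sub>R i) \<nu> \<ge> 0 then 1 else -1)"
    unfolding chiT_def using vals gst_chi[of b] b_def by simp
qed

lemma Ftri_le9: assumes "u \<in> SF \<epsilon>" "t \<in> Tri" "\<epsilon> \<ge> 0" shows "Ftri \<epsilon> u t \<le> 9 * \<epsilon>"
proof -
  obtain i j k where tt: "t = (i,j,k)" by (metis prod_cases3)
  have v: "i \<in> Lat" "j \<in> Lat" "k \<in> Lat" using Tri_verts assms(2) tt by auto
  have n: "norm (u (\<epsilon> *\<^sub>R i)) = 1" "norm (u (\<epsilon> *\<^sub>R j)) = 1" "norm (u (\<epsilon> *\<^sub>R k)) = 1"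
    using assms(1) v unfolding SF_def by auto
  have "norm (u (\<epsilon> *\<^sub>R i) + u (\<epsilon> *\<^sub>R j) + u (\<epsilon> *\<^sub>R k)) \<le> 3"
    using norm_triangle_ineq[of "u (\<epsilon> *\<^sub>R i) + u (\<epsilon> *\<^sub>R j)" "u (\<epsilon> *\<^sub>R k)"] norm_triangle_ineq[of "u (\<epsilon> *\<^sub>R i)" "u (\<epsilon> *\<^sub>R j)"] n
    by linarith
  then have "(norm (u (\<epsilon> *\<^sub>R i) + u (\<epsilon> *\<^sub>R j) + u (\<epsilon> *\<^sub>R k)))\<^sup>2 \<le> 3\<^sup>2"
    by (intro power_mono) auto
  then show ?thesis unfolding Ftri_def tt using assms(3) by (simp add: mult_left_mono mult.commute)
qed

lemma dist_verts: assumes "(i,j,k) \<in> Tri" "a \<in> {i,j,k}" "b \<in> {i,j,k}" shows "norm (a - b) \<le> 1"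
  using assms unfolding Tri_def by (auto simp: dist_norm norm_minus_commute)

lemma straddle_bound: assumes nu: "\<nu> \<in> sphere (0::pt) 1" and e: "\<epsilon> > 0" and t: "(i,j,k) \<in> Tri"
  and ns: "\<not> ((inner (\<epsilon> *\<^sub>R i) \<nu> \<ge> 0 \<and> inner (\<epsilon> *\<^sub>R j) \<nu> \<ge> 0 \<and> inner (\<epsilon> *\<^sub>R k) \<nu> \<ge> 0) \<or>
              (inner (\<epsilon> *\<^sub>R i) \<nu> < 0 \<and> inner (\<epsilon> *\<^sub>R j) \<nu> < 0 \<and> inner (\<epsilon> *\<^sub>R k) \<nu> < 0))"
  and V: "V \<in> {i,j,k}"
  shows "\<bar>inner V \<nu>\<bar> \<le> 1"
proof -
  obtain y1 y2 where y: "y1 \<in> {i,j,k}" "y2 \<in> {i,j,k}" "inner y1 \<nu> \<ge> 0" "inner y2 \<nu> < 0"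
  proof -
    have "\<exists>y1\<in>{i,j,k}. inner (\<epsilon> *\<^sub>R y1) \<nu> \<ge> 0" "\<exists>y2\<in>{i,j,k}. inner (\<epsilon> *\<^sub>R y2) \<nu> < 0" using ns by auto
    then obtain y1 y2 where "y1\<in>{i,j,k}" "inner (\<epsilon> *\<^sub>R y1) \<nu> \<ge> 0" "y2\<in>{i,j,k}" "inner (\<epsilon> *\<^sub>R y2) \<nu> < 0" by blast
    moreover have "inner (\<epsilon> *\<^sub>R y) \<nu> = \<epsilon> * inner y \<nu>" for y by simp
    ultimately show thesis using that e by (metis zero_le_mult_iff mult_less_0_iff not_less order_less_irrefl)
  qed
  have d1: "\<bar>inner (V - y1) \<nu>\<bar> \<le> 1" using abs_inner_unit[OF nu, of "V - y1"] dist_verts[OF t V y(1)] by simp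
  have d2: "\<bar>inner (V - y2) \<nu>\<bar> \<le> 1" using abs_inner_unit[OF nu, of "V - y2"] dist_verts[OF t V y(2)] by simp
  show ?thesis using d1 d2 y(3,4) by (simp add: inner_diff_left)
qed

section \<open>Counting lattice points near a line\<close>

lemma fiber_card: fixes A B :: real and M :: int assumes B: "\<bar>B\<bar> \<ge> 1/2"
  shows "card {q \<in> {-M..M}. \<bar>m * A + q * B\<bar> \<le> 1} \<le> 5"
proof (cases "{q \<in> {-M..M}. \<bar>m * A + q * B\<bar> \<le> 1} = {}")
  case True then show ?thesis unfolding True by simp
next
  case False
  define F where "F = {q \<in> {-M..M}. \<bar>m * A + q * B\<bar> \<le> 1}"
  have fin: "finite F" unfolding F_def by (rule finite_subset[of _ "{-M..M}"]) auto
  define q0 where "q0 = Min F"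
  have q0: "q0 \<in> F" unfolding q0_def using fin False F_def by (intro Min_in) auto
  have "F \<subseteq> {q0..q0+4}"
  proof
    fix q assume q: "q \<in> F"
    have ge: "q0 \<le> q" unfolding q0_def using fin q by simp
    have "\<bar>(q - q0) * B\<bar> \<le> 2"
    proof -
      have "\<bar>m * A + q * B\<bar> \<le> 1" "\<bar>m * A + q0 * B\<bar> \<le> 1" using q q0 unfolding F_def by auto
      moreover have "(q - q0) * B = (m * A + q * B) - (m * A + q0 * B)" by (simp add: algebra_simps)
      ultimately show ?thesis by linarith
    qed
    then have h2: "\<bar>real_of_int (q - q0) * B\<bar> \<le> 2" by simp
    have "\<bar>real_of_int (q - q0)\<bar> * (1/2) \<le> \<bar>real_of_int (q - q0)\<bar> * \<bar>B\<bar>" using B by (intro mult_left_mono) auto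
    also have "\<dots> \<le> 2" using h2 by (simp add: abs_mult)
    finally have "real_of_int (q - q0) \<le> real_of_int 4" using abs_ge_self[of "real_of_int (q - q0)"] by simp
    then have "q - q0 \<le> 4" by (simp only: of_int_le_iff)
    then show "q \<in> {q0..q0+4}" using ge by simp
  qed
  then have "card F \<le> card {q0..q0+4}" by (intro card_mono) auto
  then show ?thesis unfolding F_def by simp
qed

lemma count_box: fixes A B :: real and M :: int assumes B: "\<bar>B\<bar> \<ge> 1/2" and M: "M \<ge> 0"
  shows "card {(m, q). m \<in> {-M..M} \<and> q \<in> {-M..M} \<and> \<bar>m * A + q * B\<bar> \<le> 1} \<le> (2 * nat M + 1) * 5"
proof -
  have eq: "{(m, q). m \<in> {-M..M} \<and> q \<in> {-M..M} \<and> \<bar>m * A + q * B\<bar> \<le> 1} = Sigma {-M..M} (\<lambda>m. {q \<in> {-M..M}. \<bar>m * A + q * B\<bar> \<le> 1})"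
    by auto
  have "card (Sigma {-M..M} (\<lambda>m. {q \<in> {-M..M}. \<bar>m * A + q * B\<bar> \<le> 1})) = (\<Sum>m\<in>{-M..M}. card {q \<in> {-M..M}. \<bar>m * A + q * B\<bar> \<le> 1})"
  proof -
    have "\<forall>m\<in>{-M..M}. finite {q \<in> {-M..M}. \<bar>m * A + q * B\<bar> \<le> 1}"
      by (auto intro: finite_subset[of _ "{-M..M}"])
    then show ?thesis by (intro card_SigmaI) auto
  qed
  also have "\<dots> \<le> (\<Sum>m\<in>{-M..M}. 5)" by (intro sum_mono fiber_card[OF B])
  also have "\<dots> = (2 * nat M + 1) * 5" using M by simp
  finally show ?thesis unfolding eq .
qed

lemma count_line: fixes M :: int assumes nu: "\<nu> \<in> sphere (0::pt) 1" and M: "M \<ge> 0"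
  shows "card {(m, q). m \<in> {-M..M} \<and> q \<in> {-M..M} \<and> \<bar>inner (lp m q) \<nu>\<bar> \<le> 1} \<le> (2 * nat M + 1) * 5"
proof -
  define A where "A = fst \<nu>"
  define B where "B = fst \<nu> / 2 + snd \<nu> * sqrt 3 / 2"
  have inn: "inner (lp m q) \<nu> = m * A + q * B" for m q
    unfolding A_def B_def by (simp add: lp_def inner_prod_def algebra_simps)
  have ab: "(fst \<nu>)\<^sup>2 + (snd \<nu>)\<^sup>2 = 1" using unit_sq[OF nu] .
  have AB: "\<bar>A\<bar> \<ge> 1/2 \<or> \<bar>B\<bar> \<ge> 1/2"
  proof (rule ccontr)
    assume "\<not> (\<bar>A\<bar> \<ge> 1/2 \<or> \<bar>B\<bar> \<ge> 1/2)"
    then have a: "\<bar>fst \<nu>\<bar> < 1/2" and b: "\<bar>B\<bar> < 1/2" unfolding A_def by auto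
    have "\<bar>fst \<nu>\<bar>\<^sup>2 < (1/2)\<^sup>2" by (rule power_strict_mono) (use a in auto)
    then have "(fst \<nu>)\<^sup>2 < 1/4" by (simp add: power2_eq_square)
    then have s2: "(snd \<nu>)\<^sup>2 > 3/4" using ab by linarith
    have s3: "(sqrt 3 / 2)\<^sup>2 = (3/4::real)" by (simp add: power2_eq_square)
    have sb: "\<bar>snd \<nu>\<bar> > sqrt 3 / 2"
    proof (rule ccontr)
      assume "\<not> \<bar>snd \<nu>\<bar> > sqrt 3 / 2"
      then have "\<bar>snd \<nu>\<bar>\<^sup>2 \<le> (sqrt 3 / 2)\<^sup>2" by (intro power_mono) auto
      then show False using s2 s3 by simp
    qed
    have "\<bar>snd \<nu> * sqrt 3 / 2\<bar> = \<bar>snd \<nu>\<bar> * (sqrt 3 / 2)" by (simp add: abs_mult)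
    also have "\<dots> > (sqrt 3 / 2) * (sqrt 3 / 2)" by (rule mult_strict_right_mono[OF sb]) simp
    also have "(sqrt 3 / 2) * (sqrt 3 / 2) = (3/4::real)" by simp
    finally have c1: "\<bar>snd \<nu> * sqrt 3 / 2\<bar> > 3/4" .
    have "snd \<nu> * sqrt 3 / 2 = B - fst \<nu> / 2" unfolding B_def by simp
    then have "\<bar>snd \<nu> * sqrt 3 / 2\<bar> \<le> \<bar>B\<bar> + \<bar>fst \<nu>\<bar> / 2" by (simp add: abs_triangle_ineq4[of B "fst \<nu> / 2", simplified])
    then show False using a b c1 by linarith
  qed
  show ?thesis
  proof (cases "\<bar>B\<bar> \<ge> 1/2")
    case True then show ?thesis using count_box[OF True M, of A] unfolding inn by simp
  next
    case False
    then have A: "\<bar>A\<bar> \<ge> 1/2" using AB by simp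
    have "{(m, q). m \<in> {-M..M} \<and> q \<in> {-M..M} \<and> \<bar>inner (lp m q) \<nu>\<bar> \<le> 1} =
          prod.swap ` {(q, m). q \<in> {-M..M} \<and> m \<in> {-M..M} \<and> \<bar>q * B + m * A\<bar> \<le> 1}"
      unfolding inn by (auto simp: add.commute image_iff)
    then have "card {(m, q). m \<in> {-M..M} \<and> q \<in> {-M..M} \<and> \<bar>inner (lp m q) \<nu>\<bar> \<le> 1} \<le>
        card {(q, m). q \<in> {-M..M} \<and> m \<in> {-M..M} \<and> \<bar>q * B + m * A\<bar> \<le> 1}"
    proof -
      assume eq: "{(m, q). m \<in> {-M..M} \<and> q \<in> {-M..M} \<and> \<bar>inner (lp m q) \<nu>\<bar> \<le> 1} =
          prod.swap ` {(q, m). q \<in> {-M..M} \<and> m \<in> {-M..M} \<and> \<bar>q * B + m * A\<bar> \<le> 1}"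
      have fin: "finite {(q, m). q \<in> {-M..M} \<and> m \<in> {-M..M} \<and> \<bar>q * B + m * A\<bar> \<le> 1}"
        by (rule finite_subset[of _ "{-M..M} \<times> {-M..M}"]) auto
      show ?thesis unfolding eq by (rule card_image_le[OF fin])
    qed
    also have "\<dots> \<le> (2 * nat M + 1) * 5" by (rule count_box[OF A M])
    finally show ?thesis .
  qed
qed


lemma hull_near_vertex: assumes t: "(i,j,k) \<in> Tri" and x: "x \<in> tri_set \<epsilon> (i,j,k)" and e: "\<epsilon> > 0"
  and v: "v \<in> {i,j,k}"
  shows "norm (x - \<epsilon> *\<^sub>R v) \<le> \<epsilon>"
proof -
  have "tri_set \<epsilon> (i,j,k) \<subseteq> cball (\<epsilon> *\<^sub>R v) \<epsilon>"
    unfolding tri_set_def prod.case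
  proof (rule hull_minimal)
    show "convex (cball (\<epsilon> *\<^sub>R v) \<epsilon>)" by (rule convex_cball)
    have "norm (\<epsilon> *\<^sub>R v - \<epsilon> *\<^sub>R w) \<le> \<epsilon>" if "w \<in> {i,j,k}" for w
    proof -
      have "norm (\<epsilon> *\<^sub>R v - \<epsilon> *\<^sub>R w) = \<epsilon> * norm (v - w)" using e by (simp add: scaleR_diff_right[symmetric])
      also have "\<dots> \<le> \<epsilon> * 1" using dist_verts[OF t v that] e by (intro mult_left_mono) auto
      finally show ?thesis by simp
    qed
    then show "{\<epsilon> *\<^sub>R i, \<epsilon> *\<^sub>R j, \<epsilon> *\<^sub>R k} \<subseteq> cball (\<epsilon> *\<^sub>R v) \<epsilon>" by (auto simp: dist_norm)
  qed
  then show ?thesis using x by (auto simp: dist_norm norm_minus_commute)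
qed

lemma Fen_comp_bound: assumes nu: "\<nu> \<in> sphere (0::pt) 1" and e: "\<epsilon> > 0" "\<epsilon> \<le> 1"
  shows "Fen \<epsilon> (ucomp \<nu> \<epsilon>) (Sq \<nu> 1) \<le> 630"
proof -
  let ?u = "ucomp \<nu> \<epsilon>"
  let ?Q = "Sq \<nu> 1"
  define M where "M = \<lceil>2 / \<epsilon>\<rceil>"
  have "2 / \<epsilon> > 0" using e by simp
  then have M0: "M \<ge> 0" unfolding M_def zero_le_ceiling by linarith
  define Box where "Box = {(m, q). m \<in> {-M..M} \<and> q \<in> {-M..M} \<and> \<bar>inner (lp m q) \<nu>\<bar> \<le> 1}"
  have finT: "finite (TriIn \<epsilon> ?Q)" using finite_TriIn[OF e(1) Sq_sub_ball[OF nu]] .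
  define St where "St = {t \<in> TriIn \<epsilon> ?Q. Ftri \<epsilon> ?u t \<noteq> 0}"
  have St_sub: "St \<subseteq> (\<lambda>((m, q), b). triF (m - 1) q b) ` (Box \<times> UNIV)"
  proof
    fix t assume tS: "t \<in> St"
    then have tT: "t \<in> Tri" and tQ: "tri_set \<epsilon> t \<subseteq> ?Q" and nz: "Ftri \<epsilon> ?u t \<noteq> 0"
      unfolding St_def TriIn_def by auto
    obtain p q b where tb: "t = triF p q b" using tT Tri_iff by auto
    obtain i j k where ijk: "t = (i,j,k)" by (metis prod_cases3)
    have vin: "lp (p+1) q \<in> {i,j,k}" using triF_vset[of p q b] unfolding tb[symmetric] ijk by (simp add: vset_def)
    have ns: "\<not> ((inner (\<epsilon> *\<^sub>R i) \<nu> \<ge> 0 \<and> inner (\<epsilon> *\<^sub>R j) \<nu> \<ge> 0 \<and> inner (\<epsilon> *\<^sub>R k) \<nu> \<ge> 0) \<or>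
              (inner (\<epsilon> *\<^sub>R i) \<nu> < 0 \<and> inner (\<epsilon> *\<^sub>R j) \<nu> < 0 \<and> inner (\<epsilon> *\<^sub>R k) \<nu> < 0))"
      using ucomp_vals(1)[OF e(1), of i j k \<nu>] nz tT ijk by auto
    have line: "\<bar>inner (lp (p+1) q) \<nu>\<bar> \<le> 1" using straddle_bound[OF nu e(1) _ ns vin] tT ijk by simp
    have "\<epsilon> *\<^sub>R lp (p+1) q \<in> tri_set \<epsilon> t" unfolding tri_set_def ijk using vin by (auto intro: hull_inc)
    then have "\<epsilon> *\<^sub>R lp (p+1) q \<in> cball 0 1" using tQ Sq_sub_ball[OF nu] by auto
    then have nr: "norm (\<epsilon> *\<^sub>R lp (p+1) q) \<le> 1" by simp
    have h1: "\<bar>\<epsilon> * (p+1)\<bar> \<le> 2" using abs_inner_le(1)[of "\<epsilon> *\<^sub>R lp (p+1) q"] nr by simp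
    have h2: "\<bar>\<epsilon> * q\<bar> \<le> 2" using abs_inner_le(2)[of "\<epsilon> *\<^sub>R lp (p+1) q"] nr by simp
    have "\<epsilon> * \<bar>real_of_int (p+1)\<bar> \<le> 2" using h1 e by (simp add: abs_mult)
    then have "\<bar>real_of_int (p+1)\<bar> \<le> 2 / \<epsilon>" using e by (simp add: pos_le_divide_eq mult.commute)
    then have b1: "\<bar>p+1\<bar> \<le> M" unfolding M_def by linarith
    have "\<epsilon> * \<bar>real_of_int q\<bar> \<le> 2" using h2 e by (simp add: abs_mult)
    then have "\<bar>real_of_int q\<bar> \<le> 2 / \<epsilon>" using e by (simp add: pos_le_divide_eq mult.commute)
    then have b2: "\<bar>q\<bar> \<le> M" unfolding M_def by linarith
    have "((p+1, q), b) \<in> Box \<times> UNIV" unfolding Box_def using b1 b2 line by auto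
    moreover have "t = (\<lambda>((m, q), b). triF (m - 1) q b) ((p+1, q), b)" using tb by simp
    ultimately show "t \<in> (\<lambda>((m, q), b). triF (m - 1) q b) ` (Box \<times> UNIV)" by blast
  qed
  have finBox: "finite Box" unfolding Box_def by (rule finite_subset[of _ "{-M..M} \<times> {-M..M}"]) auto
  have cB: "card Box \<le> (2 * nat M + 1) * 5" unfolding Box_def by (rule count_line[OF nu M0])
  have finBU: "finite (Box \<times> (UNIV :: bool set))" using finBox by simp
  have "card St \<le> card ((\<lambda>((m, q), b). triF (m - 1) q b) ` (Box \<times> (UNIV :: bool set)))"
    by (rule card_mono[OF finite_imageI[OF finBU] St_sub])
  also have "\<dots> \<le> card (Box \<times> (UNIV :: bool set))" by (rule card_image_le[OF finBU])
  also have "\<dots> = 2 * card Box" by (simp add: card_cartesian_product)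
  finally have cS: "card St \<le> 2 * ((2 * nat M + 1) * 5)" using cB by linarith
  have "Fen \<epsilon> ?u ?Q = sum (Ftri \<epsilon> ?u) St"
    unfolding Fen_def St_def using finT by (intro sum.mono_neutral_right) auto
  also have "\<dots> \<le> sum (\<lambda>_. 9 * \<epsilon>) St"
    using Ftri_le9[OF ucomp_SF] e unfolding St_def TriIn_def by (intro sum_mono) auto
  also have "\<dots> = real (card St) * (9 * \<epsilon>)" by simp
  also have "\<dots> \<le> real (2 * ((2 * nat M + 1) * 5)) * (9 * \<epsilon>)"
    using cS e by (intro mult_right_mono) auto
  also have "\<dots> = 90 * \<epsilon> * (2 * real_of_int M + 1)"
  proof -
    have "real (nat M) = real_of_int M" using M0 by simp
    then show ?thesis by (simp add: algebra_simps)
  qed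
  also have "\<dots> \<le> 90 * \<epsilon> * (2 * (2 / \<epsilon> + 1) + 1)"
  proof -
    have "real_of_int M \<le> 2 / \<epsilon> + 1" unfolding M_def by (rule of_int_ceiling_le_add_one)
    then show ?thesis using e by (intro mult_left_mono) auto
  qed
  also have "\<dots> = 360 + 270 * \<epsilon>" using e by (simp add: field_simps)
  also have "\<dots> \<le> 630" using e by simp
  finally show ?thesis .
qed

definition gen :: "real \<Rightarrow> pt \<Rightarrow> bool" where
  "gen \<epsilon> x \<longleftrightarrow> inner aA x / \<epsilon> \<notin> \<int> \<and> inner aB x / \<epsilon> \<notin> \<int> \<and> inner aA x / \<epsilon> + inner aB x / \<epsilon> \<notin> \<int>"

lemma null_hyp: assumes "a \<noteq> 0" shows "{x::pt. inner a x = b} \<in> null_sets lborel"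
proof -
  have "{x::pt. inner a x = b} \<in> null_sets lebesgue"
    using negligible_hyperplane[of a b] assms negligible_iff_null_sets by auto
  moreover have "{x::pt. inner a x = b} \<in> sets lborel"
    by (simp add: closed_hyperplane)
  ultimately show ?thesis using null_sets_completion_iff[of "{x::pt. inner a x = b}" lborel] by simp
qed

lemma AE_gen: assumes e: "\<epsilon> > 0" shows "AE x in lborel. gen \<epsilon> x"
proof -
  have h: "AE x in lborel. inner a x \<noteq> b" if "a \<noteq> 0" for a :: pt and b
    using AE_not_in[OF null_hyp[OF that, of b]] by simp
  have "AE x in lborel. \<forall>z::int. inner aA x \<noteq> \<epsilon> * z \<and> inner aB x \<noteq> \<epsilon> * z \<and> inner (aA + aB) x \<noteq> \<epsilon> * z"
    unfolding AE_all_countable using h[OF aA_nz] h[OF aB_nz] h[OF aAB_nz] by auto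
  then show ?thesis
  proof (rule AE_mp, intro AE_I2 impI)
    fix x assume H: "\<forall>z::int. inner aA x \<noteq> \<epsilon> * z \<and> inner aB x \<noteq> \<epsilon> * z \<and> inner (aA + aB) x \<noteq> \<epsilon> * z"
    have "inner aA x / \<epsilon> \<notin> \<int>"
    proof
      assume "inner aA x / \<epsilon> \<in> \<int>" then obtain z where "inner aA x / \<epsilon> = of_int z" by (auto elim: Ints_cases)
      then have "inner aA x = \<epsilon> * z" using e by (simp add: field_simps)
      then show False using H by blast
    qed
    moreover have "inner aB x / \<epsilon> \<notin> \<int>"
    proof
      assume "inner aB x / \<epsilon> \<in> \<int>" then obtain z where "inner aB x / \<epsilon> = of_int z" by (auto elim: Ints_cases)
      then have "inner aB x = \<epsilon> * z" using e by (simp add: field_simps)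
      then show False using H by blast
    qed
    moreover have "inner aA x / \<epsilon> + inner aB x / \<epsilon> \<notin> \<int>"
    proof
      assume "inner aA x / \<epsilon> + inner aB x / \<epsilon> \<in> \<int>" then obtain z where "inner aA x / \<epsilon> + inner aB x / \<epsilon> = of_int z" by (auto elim: Ints_cases)
      then have "inner (aA + aB) x = \<epsilon> * z" using e by (simp add: field_simps inner_add_left)
      then show False using H by blast
    qed
    ultimately show "gen \<epsilon> x" unfolding gen_def by blast
  qed
qed

lemma chi_comp_pt: assumes nu: "\<nu> \<in> sphere (0::pt) 1" and e: "\<epsilon> > 0" and g: "gen \<epsilon> x"
  and small: "\<epsilon> < \<bar>inner x \<nu>\<bar>"
  shows "chi \<epsilon> (ucomp \<nu> \<epsilon>) x = chinu \<nu> x"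
proof -
  define t where "t = tri_of \<epsilon> x"
  have tT: "t \<in> Tri" unfolding t_def tri_of_def by (rule Tri_triF)
  have xi: "x \<in> interior (tri_set \<epsilon> t)" unfolding t_def using tri_of_generic[OF e] g unfolding gen_def by blast
  obtain i j k where ijk: "t = (i,j,k)" by (metis prod_cases3)
  have xt: "x \<in> tri_set \<epsilon> (i,j,k)" using xi interior_subset ijk by blast
  have near: "\<bar>inner (\<epsilon> *\<^sub>R v) \<nu> - inner x \<nu>\<bar> < \<bar>inner x \<nu>\<bar>" if "v \<in> {i,j,k}" for v
  proof -
    have "\<bar>inner (\<epsilon> *\<^sub>R v) \<nu> - inner x \<nu>\<bar> = \<bar>inner (x - \<epsilon> *\<^sub>R v) \<nu>\<bar>" by (simp add: inner_diff_left)
    also have "\<dots> \<le> norm (x - \<epsilon> *\<^sub>R v)" by (rule abs_inner_unit[OF nu])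
    also have "\<dots> \<le> \<epsilon>" using hull_near_vertex[OF _ xt e that] tT ijk by simp
    finally show ?thesis using small by linarith
  qed
  have chi: "chi \<epsilon> (ucomp \<nu> \<epsilon>) x = chiT \<epsilon> (ucomp \<nu> \<epsilon>) (i,j,k)" using chi_eq[OF e tT xi] ijk by simp
  show ?thesis
  proof (cases "inner x \<nu> > 0")
    case True
    have p: "inner (\<epsilon> *\<^sub>R v) \<nu> > 0" if "v \<in> {i,j,k}" for v using near[OF that] True by linarith
    have pos: "inner (\<epsilon> *\<^sub>R i) \<nu> \<ge> 0" "inner (\<epsilon> *\<^sub>R j) \<nu> \<ge> 0" "inner (\<epsilon> *\<^sub>R k) \<nu> \<ge> 0"
      using p[of i] p[of j] p[of k] by (simp_all only: insert_iff simp_thms less_imp_le)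
    have "chiT \<epsilon> (ucomp \<nu> \<epsilon>) (i,j,k) = 1" using ucomp_vals(2)[OF e, of i j k \<nu>] tT ijk pos by simp
    then show ?thesis using chi True by (simp add: chinu_def)
  next
    case False
    then have neg: "inner x \<nu> < 0" using small e by (auto simp: abs_if split: if_splits)
    have p: "inner (\<epsilon> *\<^sub>R v) \<nu> < 0" if "v \<in> {i,j,k}" for v using near[OF that] neg by linarith
    have n3: "inner (\<epsilon> *\<^sub>R i) \<nu> < 0" "inner (\<epsilon> *\<^sub>R j) \<nu> < 0" "inner (\<epsilon> *\<^sub>R k) \<nu> < 0"
      using p[of i] p[of j] p[of k] by (simp_all only: insert_iff simp_thms)
    have "chiT \<epsilon> (ucomp \<nu> \<epsilon>) (i,j,k) = -1" using ucomp_vals(2)[OF e, of i j k \<nu>] tT ijk n3 by simp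
    then show ?thesis using chi neg by (simp add: chinu_def)
  qed
qed

definition epsc :: "nat \<Rightarrow> real" where "epsc n = inverse (real (Suc n))"

lemma epsc_pos: "epsc n > 0" by (simp add: epsc_def)
lemma epsc_le1: "epsc n \<le> 1" by (simp add: epsc_def inverse_le_1_iff)
lemma epsc_lim: "epsc \<longlonglongrightarrow> 0" unfolding epsc_def by (rule LIMSEQ_inverse_real_of_nat)

lemma comp_L1: assumes nu: "\<nu> \<in> sphere (0::pt) 1"
  shows "(\<lambda>n. L1dist (Sq \<nu> 1) (chi (epsc n) (ucomp \<nu> (epsc n))) (chinu \<nu>)) \<longlonglongrightarrow> 0"
proof -
  let ?Q = "Sq \<nu> 1"
  have Qb: "?Q \<in> sets borel" "bounded ?Q" using Rect_open Rect_bounded[OF nu] unfolding Sq_def by auto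
  have nu0: "\<nu> \<noteq> 0" using nu by auto
  define g where "g = (\<lambda>n x. indicator ?Q x *\<^sub>R \<bar>chi (epsc n) (ucomp \<nu> (epsc n)) x - chinu \<nu> x\<bar>)"
  define w where "w = (\<lambda>x. (3::real) * indicator ?Q x)"
  have m0: "(\<lambda>x. 0::real) \<in> borel_measurable lborel" by simp
  have ms: "g n \<in> borel_measurable lborel" for n
    unfolding g_def using diff_meas[OF epsc_pos, of n "ucomp \<nu> (epsc n)" \<nu>] Qb by measurable
  have iw: "integrable lborel w"
    unfolding w_def using Qb emeasure_bounded_finite[OF Qb(2)] by (intro integrable_mult_right integrable_real_indicator) auto
  have bnd: "AE x in lborel. norm (g n x) \<le> w x" for n
  proof (rule AE_I2)
    fix x
    have "\<bar>chi (epsc n) (ucomp \<nu> (epsc n)) x - chinu \<nu> x\<bar> \<le> 3"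
      using chi_bound[OF ucomp_SF, of "epsc n" \<nu> x] chinu_bound[of \<nu> x] by linarith
    then show "norm (g n x) \<le> w x" unfolding g_def w_def by (auto simp: indicator_def)
  qed
  have ae: "AE x in lborel. (\<lambda>n. g n x) \<longlonglongrightarrow> 0"
  proof -
    have A1: "AE x in lborel. x \<notin> {x. inner \<nu> x = 0}" by (rule AE_not_in[OF null_hyperplane[OF nu0]])
    have A2: "AE x in lborel. \<forall>n. gen (epsc n) x" unfolding AE_all_countable using AE_gen[OF epsc_pos] by blast
    have pw: "(\<lambda>n. g n x) \<longlonglongrightarrow> 0" if x: "inner \<nu> x \<noteq> 0" and gx: "\<forall>n. gen (epsc n) x" for x
    proof -
      have "\<bar>inner x \<nu>\<bar> > 0" using x by (simp add: inner_commute)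
      from order_tendstoD(2)[OF epsc_lim this]
      have "eventually (\<lambda>n. g n x = 0) sequentially"
      proof eventually_elim
        case (elim n)
        then show ?case unfolding g_def using chi_comp_pt[OF nu epsc_pos gx[rule_format] elim] by simp
      qed
      then show ?thesis by (rule tendsto_eventually)
    qed
    show ?thesis using A1 A2 by eventually_elim (use pw in auto)
  qed
  have "(\<lambda>n. integral\<^sup>L lborel (g n)) \<longlonglongrightarrow> integral\<^sup>L lborel (\<lambda>x. 0::real)"
    using Bochner_Integration.integral_dominated_convergence[OF m0 ms iw ae bnd] by simp
  then show ?thesis unfolding L1dist_def set_lebesgue_integral_def g_def by simp
qed

lemma psi_le: assumes "\<forall>n. eps' n > 0" "eps' \<longlonglongrightarrow> 0" "\<forall>n. v n \<in> SF (eps' n)"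
  "(\<lambda>n. L1dist (Rect \<nu> 1 1) (chi (eps' n) (v n)) (chinu \<nu>)) \<longlonglongrightarrow> 0"
  shows "psi 1 1 \<nu> \<le> liminf (\<lambda>n. ereal (Fen (eps' n) (v n) (Rect \<nu> 1 1)))"
proof -
  have "psi 1 1 \<nu> = Inf {liminf (\<lambda>n. ereal (Fen (eps n) (u n) (Rect \<nu> 1 1))) | eps u.
        (\<forall>n. eps n > 0) \<and> eps \<longlonglongrightarrow> 0 \<and> (\<forall>n. u n \<in> SF (eps n)) \<and>
        (\<lambda>n. L1dist (Rect \<nu> 1 1) (chi (eps n) (u n)) (chinu \<nu>)) \<longlonglongrightarrow> 0}"
    unfolding psi_def by (simp add: one_ereal_def[symmetric])
  also have "\<dots> \<le> liminf (\<lambda>n. ereal (Fen (eps' n) (v n) (Rect \<nu> 1 1)))"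
    by (rule Inf_lower) (use assms in blast)
  finally show ?thesis .
qed

lemma psi_finite: assumes nu: "\<nu> \<in> sphere (0::pt) 1" shows "psi 1 1 \<nu> \<le> 630"
proof -
  have "psi 1 1 \<nu> \<le> liminf (\<lambda>n. ereal (Fen (epsc n) (ucomp \<nu> (epsc n)) (Rect \<nu> 1 1)))"
    by (rule psi_le) (use epsc_pos epsc_lim ucomp_SF comp_L1[OF nu] in \<open>auto simp: Sq_def\<close>)
  also have "\<dots> \<le> liminf (\<lambda>n. ereal 630)"
    by (rule Liminf_mono) (use Fen_comp_bound[OF nu epsc_pos epsc_le1] in \<open>auto simp: Sq_def\<close>)
  also have "\<dots> = 630" by (simp add: Liminf_const)
  finally show ?thesis .
qed


lemma norm_lp_real: "norm ((\<alpha> + \<beta> / 2, \<beta> * sqrt 3 / 2) :: pt) \<le> \<bar>\<alpha>\<bar> + \<bar>\<beta>\<bar>"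
proof -
  have eq: "((\<alpha> + \<beta> / 2, \<beta> * sqrt 3 / 2) :: pt) = \<alpha> *\<^sub>R (1, 0) + \<beta> *\<^sub>R (1/2, sqrt 3 / 2)" by simp
  have n1: "norm ((1, 0) :: pt) = 1" by (simp add: norm_Pair)
  have n2: "norm ((1/2, sqrt 3 / 2) :: pt) = 1" by (simp add: norm_Pair power2_eq_square)
  have "norm ((\<alpha> + \<beta> / 2, \<beta> * sqrt 3 / 2) :: pt) \<le> norm (\<alpha> *\<^sub>R ((1, 0)::pt)) + norm (\<beta> *\<^sub>R ((1/2, sqrt 3 / 2)::pt))"
    unfolding eq by (rule norm_triangle_ineq)
  also have "\<dots> = \<bar>\<alpha>\<bar> + \<bar>\<beta>\<bar>" by (simp only: norm_scaleR n1 n2 mult_1_right)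
  finally show ?thesis .
qed

lemma lattice_approx: assumes e: "\<epsilon> > 0" shows "\<exists>w\<in>Lat1. norm (\<epsilon> *\<^sub>R w - z) \<le> 4 * \<epsilon>"
proof -
  define y where "y = (1 / \<epsilon>) *\<^sub>R z"
  obtain a b where yab: "y = (a + b/2, b * sqrt 3 / 2)" "inner aA y = a" "inner aB y = b" by (rule pt_decomp)
  define m0 where "m0 = \<lfloor>a\<rfloor>"
  define n0 where "n0 = \<lfloor>b\<rfloor>"
  define d where "d = (m0 - n0) mod 3"
  have d: "0 \<le> d" "d \<le> 2" unfolding d_def by simp_all
  define w where "w = lp (m0 - d) n0"
  have wL: "w \<in> Lat1" unfolding w_def Lat1_eq d_def by auto presburger
  have "y - w = ((a - (m0 - d)) + (b - n0) / 2, (b - n0) * sqrt 3 / 2)"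
    unfolding yab(1) w_def lp_def by (simp add: algebra_simps add_divide_distrib diff_divide_distrib)
  then have "norm (y - w) \<le> \<bar>a - (m0 - d)\<bar> + \<bar>b - n0\<bar>" using norm_lp_real by metis
  also have "\<dots> \<le> 4" using d unfolding m0_def n0_def by linarith
  finally have n4: "norm (w - y) \<le> 4" by (simp add: norm_minus_commute)
  have "\<epsilon> *\<^sub>R w - z = \<epsilon> *\<^sub>R (w - y)" unfolding y_def using e by (simp add: algebra_simps)
  then have "norm (\<epsilon> *\<^sub>R w - z) = \<epsilon> * norm (w - y)" using e by simp
  also have "\<dots> \<le> \<epsilon> * 4" using n4 e by (intro mult_left_mono) auto
  finally show ?thesis using wL by (auto simp: mult.commute)
qed

lemma inner_perp_perp: assumes "\<nu> \<in> sphere (0::pt) 1" shows "inner (perp \<nu>) (perp \<nu>) = 1"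
proof -
  have "norm (perp \<nu>) = 1" using assms norm_perp by simp
  then show ?thesis by (simp add: norm_eq_sqrt_inner)
qed

lemma copy_geom: fixes k N :: nat assumes nu: "\<nu> \<in> sphere (0::pt) 1" and N: "N \<ge> (1::nat)" and k: "k < N"
  and s: "s > 0" and c: "norm (c - (-1/2 + (k + 1/2) / N) *\<^sub>R perp \<nu>) \<le> \<rho>"
  and small: "s / 2 + \<rho> < 1 / (2 * N)" and x: "x \<in> aff c s ` Sq \<nu> 1"
  shows "-1/2 + k / N < inner x (perp \<nu>)" "inner x (perp \<nu>) < -1/2 + (k + 1) / N"
    "\<bar>inner x \<nu>\<bar> < 1 / (2 * N)"
proof -
  define z where "z = (-1/2 + (k + 1/2) / N) *\<^sub>R perp \<nu>"
  obtain y where y: "y \<in> Sq \<nu> 1" and xy: "x = c + s *\<^sub>R y" using x unfolding aff_def by auto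
  have y1: "\<bar>inner y (perp \<nu>)\<bar> < 1/2" "\<bar>inner y \<nu>\<bar> < 1/2" using y by (auto simp: Sq_def Rect_def)
  have np: "norm (perp \<nu>) = 1" using nu norm_perp by simp
  have zp: "inner z (perp \<nu>) = -1/2 + (k + 1/2) / N" unfolding z_def using inner_perp_perp[OF nu] by simp
  have zn: "inner z \<nu> = 0" unfolding z_def using inner_perp_self by simp
  have c1: "\<bar>inner (c - z) (perp \<nu>)\<bar> \<le> \<rho>"
    using Cauchy_Schwarz_ineq2[of "c - z" "perp \<nu>"] np c unfolding z_def by simp
  have c2: "\<bar>inner (c - z) \<nu>\<bar> \<le> \<rho>"
    using abs_inner_unit[OF nu, of "c - z"] c unfolding z_def by simp
  have sy1: "\<bar>s * inner y (perp \<nu>)\<bar> < s / 2" using y1 s by (simp add: abs_mult)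
  have sy2: "\<bar>s * inner y \<nu>\<bar> < s / 2" using y1 s by (simp add: abs_mult)
  have ex1: "inner x (perp \<nu>) = inner (c - z) (perp \<nu>) + inner z (perp \<nu>) + s * inner y (perp \<nu>)"
    unfolding xy by (simp add: inner_diff_left inner_add_left)
  have ex2: "inner x \<nu> = inner (c - z) \<nu> + s * inner y \<nu>"
    unfolding xy using zn by (simp add: inner_diff_left inner_add_left)
  have Npos: "real N > 0" using N by simp
  have h: "(k + 1/2) / N - 1 / (2 * N) = k / N" "(k + 1/2) / N + 1 / (2 * N) = (k + 1) / N"
    using Npos by (simp_all add: field_simps)
  show "-1/2 + k / N < inner x (perp \<nu>)" using ex1 zp c1 sy1 small h(1) by linarith
  show "inner x (perp \<nu>) < -1/2 + (k + 1) / N" using ex1 zp c1 sy1 small h(2) by linarith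
  show "\<bar>inner x \<nu>\<bar> < 1 / (2 * N)" using ex2 c2 sy2 small by linarith
qed

lemma bnd_int: fixes f :: "pt \<Rightarrow> real" assumes f: "f \<in> borel_measurable borel" and B: "\<And>x. \<bar>f x\<bar> \<le> B"
  and A: "A \<in> sets borel" "bounded A"
  shows "integrable lborel (\<lambda>x. indicator A x *\<^sub>R f x)"
proof (rule integrableI_bounded_set[where A=A and B=B])
  show "A \<in> sets lborel" using A by simp
  show "(\<lambda>x. indicator A x *\<^sub>R f x) \<in> borel_measurable lborel" using f A by measurable
  show "emeasure lborel A < \<infinity>" using emeasure_bounded_finite[OF A(2)] .
  show "AE x in lborel. x \<in> A \<longrightarrow> norm (indicator A x *\<^sub>R f x) \<le> B" using B by (auto simp: indicator_def)
  show "AE x in lborel. x \<notin> A \<longrightarrow> indicator A x *\<^sub>R f x = 0" by auto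
qed

lemma L1_copy: assumes nu: "\<nu> \<in> sphere (0::pt) 1" and s: "s > 0" and e: "\<epsilon> > 0" and u: "u \<in> SF \<epsilon>"
  shows "L1dist (Sq \<nu> 1) (\<lambda>x. chi \<epsilon> u (aff c s x)) (chinu \<nu>) \<le>
     L1dist (aff c s ` Sq \<nu> 1) (chi \<epsilon> u) (chinu \<nu>) / s\<^sup>2 + (LINT x:Sq \<nu> 1|lborel. \<bar>chinu \<nu> (aff c s x) - chinu \<nu> x\<bar>)"
proof -
  let ?Q = "Sq \<nu> 1"
  have oQ: "open ?Q" unfolding Sq_def by (rule Rect_open)
  have Qb: "?Q \<in> sets borel" "bounded ?Q" using oQ Rect_bounded[OF nu] unfolding Sq_def by auto
  have am[measurable]: "aff c s \<in> borel_measurable borel" unfolding aff_def by measurable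
  have hm: "(\<lambda>y. \<bar>chi \<epsilon> u y - chinu \<nu> y\<bar>) \<in> borel_measurable borel" by (rule diff_meas[OF e])
  have f1m: "(\<lambda>x. \<bar>chi \<epsilon> u (aff c s x) - chinu \<nu> (aff c s x)\<bar>) \<in> borel_measurable borel"
    using measurable_comp[OF am hm] by (simp add: comp_def)
  have f2m: "(\<lambda>x. \<bar>chinu \<nu> (aff c s x) - chinu \<nu> x\<bar>) \<in> borel_measurable borel"
    using chinu_meas[of \<nu>] by measurable
  have f0m: "(\<lambda>x. \<bar>chi \<epsilon> u (aff c s x) - chinu \<nu> x\<bar>) \<in> borel_measurable borel"
    using measurable_comp[OF am chi_meas[OF e, of u]] chinu_meas[of \<nu>] by (simp add: comp_def) measurable
  have b1: "\<bar>\<bar>chi \<epsilon> u (aff c s x) - chinu \<nu> (aff c s x)\<bar>\<bar> \<le> 3" for x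
    using chi_bound[OF u, of "aff c s x"] chinu_bound[of \<nu> "aff c s x"] by linarith
  have b2: "\<bar>\<bar>chinu \<nu> (aff c s x) - chinu \<nu> x\<bar>\<bar> \<le> 2" for x
    using chinu_bound[of \<nu> "aff c s x"] chinu_bound[of \<nu> x] by linarith
  have b0: "\<bar>\<bar>chi \<epsilon> u (aff c s x) - chinu \<nu> x\<bar>\<bar> \<le> 3" for x
    using chi_bound[OF u, of "aff c s x"] chinu_bound[of \<nu> x] by linarith
  note i1 = bnd_int[OF f1m b1 Qb] and i2 = bnd_int[OF f2m b2 Qb] and i0 = bnd_int[OF f0m b0 Qb]
  have "L1dist ?Q (\<lambda>x. chi \<epsilon> u (aff c s x)) (chinu \<nu>) \<le>
        (LINT x:?Q|lborel. \<bar>chi \<epsilon> u (aff c s x) - chinu \<nu> (aff c s x)\<bar>) + (LINT x:?Q|lborel. \<bar>chinu \<nu> (aff c s x) - chinu \<nu> x\<bar>)"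
    unfolding L1dist_def set_lebesgue_integral_def
  proof -
    have "integral\<^sup>L lborel (\<lambda>x. indicator ?Q x *\<^sub>R \<bar>chi \<epsilon> u (aff c s x) - chinu \<nu> x\<bar>) \<le>
          integral\<^sup>L lborel (\<lambda>x. indicator ?Q x *\<^sub>R \<bar>chi \<epsilon> u (aff c s x) - chinu \<nu> (aff c s x)\<bar> + indicator ?Q x *\<^sub>R \<bar>chinu \<nu> (aff c s x) - chinu \<nu> x\<bar>)"
      by (rule Bochner_Integration.integral_mono[OF i0 Bochner_Integration.integrable_add[OF i1 i2]])
         (auto simp: indicator_def)
    also have "\<dots> = integral\<^sup>L lborel (\<lambda>x. indicator ?Q x *\<^sub>R \<bar>chi \<epsilon> u (aff c s x) - chinu \<nu> (aff c s x)\<bar>) + integral\<^sup>L lborel (\<lambda>x. indicator ?Q x *\<^sub>R \<bar>chinu \<nu> (aff c s x) - chinu \<nu> x\<bar>)"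
      by (rule Bochner_Integration.integral_add[OF i1 i2])
    finally show "integral\<^sup>L lborel (\<lambda>x. indicator ?Q x *\<^sub>R \<bar>chi \<epsilon> u (aff c s x) - chinu \<nu> x\<bar>) \<le> integral\<^sup>L lborel (\<lambda>x. indicator ?Q x *\<^sub>R \<bar>chi \<epsilon> u (aff c s x) - chinu \<nu> (aff c s x)\<bar>) + integral\<^sup>L lborel (\<lambda>x. indicator ?Q x *\<^sub>R \<bar>chinu \<nu> (aff c s x) - chinu \<nu> x\<bar>)" .
  qed
  also have "(LINT x:?Q|lborel. \<bar>chi \<epsilon> u (aff c s x) - chinu \<nu> (aff c s x)\<bar>) = L1dist (aff c s ` ?Q) (chi \<epsilon> u) (chinu \<nu>) / s\<^sup>2"
    unfolding L1dist_def using L1_aff[OF s oQ hm, of c] by simp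
  finally show ?thesis .
qed

lemma L1_mono: assumes e: "\<epsilon> > 0" and u: "u \<in> SF \<epsilon>" and Q: "Q \<in> sets borel" "bounded Q"
  and C: "C \<in> sets borel" "C \<subseteq> Q"
  shows "L1dist C (chi \<epsilon> u) (chinu \<nu>) \<le> L1dist Q (chi \<epsilon> u) (chinu \<nu>)"
  using L1_sum_disj[OF e u Q, of "{0::nat}" "\<lambda>_. C"] C by simp


lemma copy_L1:
  assumes nu: "\<nu> \<in> sphere (0::pt) 1" and ep: "\<forall>n. eps n > 0" and el: "eps \<longlonglongrightarrow> 0"
    and uS: "\<forall>n. u n \<in> SF (eps n)"
    and L1: "(\<lambda>n. L1dist (Sq \<nu> 1) (chi (eps n) (u n)) (chinu \<nu>)) \<longlonglongrightarrow> 0"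
    and s: "s > 0" and W: "\<forall>n. W n \<in> Lat1" and cz: "\<forall>n. norm (eps n *\<^sub>R W n - z) \<le> 4 * eps n"
    and zn: "inner z \<nu> = 0"
    and sub: "eventually (\<lambda>n. aff (eps n *\<^sub>R W n) s ` Sq \<nu> 1 \<subseteq> Sq \<nu> 1) sequentially"
  shows "(\<lambda>n. L1dist (Sq \<nu> 1) (chi (eps n / s) (\<lambda>x. u n (aff (eps n *\<^sub>R W n) s x))) (chinu \<nu>)) \<longlonglongrightarrow> 0"
proof -
  let ?Q = "Sq \<nu> 1"
  define c where "c n = eps n *\<^sub>R W n" for n
  have oQ: "open ?Q" unfolding Sq_def by (rule Rect_open)
  have Qb: "?Q \<in> sets borel" "bounded ?Q" using oQ Rect_bounded[OF nu] unfolding Sq_def by auto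
  have nu0: "\<nu> \<noteq> 0" using nu by auto
  have eqc: "L1dist ?Q (chi (eps n / s) (\<lambda>x. u n (aff (c n) s x))) (chinu \<nu>) = L1dist ?Q (\<lambda>x. chi (eps n) (u n) (aff (c n) s x)) (chinu \<nu>)" for n
    unfolding L1dist_def c_def using chi_shift[OF s W[rule_format] ep[rule_format]] by simp
  have cl: "(\<lambda>n. inner (c n) \<nu>) \<longlonglongrightarrow> 0"
  proof (rule tendsto_sandwich[where f="\<lambda>n. - (4 * eps n)" and h="\<lambda>n. 4 * eps n"])
    have b: "\<bar>inner (c n) \<nu>\<bar> \<le> 4 * eps n" for n
    proof -
      have "inner (c n) \<nu> = inner (c n - z) \<nu>" using zn by (simp add: inner_diff_left)
      then have "\<bar>inner (c n) \<nu>\<bar> \<le> norm (c n - z)" using abs_inner_unit[OF nu] by simp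
      then show ?thesis using cz unfolding c_def by (meson order_trans)
    qed
    show "eventually (\<lambda>n. - (4 * eps n) \<le> inner (c n) \<nu>) sequentially"
    proof (rule always_eventually, rule allI)
      fix n show "- (4 * eps n) \<le> inner (c n) \<nu>" using b[of n] unfolding abs_le_iff by linarith
    qed
    show "eventually (\<lambda>n. inner (c n) \<nu> \<le> 4 * eps n) sequentially"
    proof (rule always_eventually, rule allI)
      fix n show "inner (c n) \<nu> \<le> 4 * eps n" using b[of n] unfolding abs_le_iff by linarith
    qed
    show "(\<lambda>n. - (4 * eps n)) \<longlonglongrightarrow> 0" using tendsto_minus[OF tendsto_mult_right_zero[OF el, of 4]] by simp
    show "(\<lambda>n. 4 * eps n) \<longlonglongrightarrow> 0" using tendsto_mult_right_zero[OF el, of 4] by simp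
  qed
  have slab: "(\<lambda>n. LINT x:?Q|lborel. \<bar>chinu \<nu> (aff (c n) s x) - chinu \<nu> x\<bar>) \<longlonglongrightarrow> 0"
    by (rule slab_conv[OF nu0 s Qb cl])
  have up: "(\<lambda>n. L1dist ?Q (chi (eps n) (u n)) (chinu \<nu>) / s\<^sup>2 + (LINT x:?Q|lborel. \<bar>chinu \<nu> (aff (c n) s x) - chinu \<nu> x\<bar>)) \<longlonglongrightarrow> 0"
    using tendsto_add[OF tendsto_divide[OF L1 tendsto_const] slab, of "s\<^sup>2"] s by simp
  show ?thesis unfolding c_def[symmetric] eqc
  proof (rule tendsto_sandwich[OF _ _ tendsto_const up])
    show "eventually (\<lambda>n. 0 \<le> L1dist ?Q (\<lambda>x. chi (eps n) (u n) (aff (c n) s x)) (chinu \<nu>)) sequentially"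
      by (simp add: L1_nonneg)
    show "eventually (\<lambda>n. L1dist ?Q (\<lambda>x. chi (eps n) (u n) (aff (c n) s x)) (chinu \<nu>) \<le>
        L1dist ?Q (chi (eps n) (u n)) (chinu \<nu>) / s\<^sup>2 + (LINT x:?Q|lborel. \<bar>chinu \<nu> (aff (c n) s x) - chinu \<nu> x\<bar>)) sequentially"
      using sub unfolding c_def[symmetric]
    proof eventually_elim
      case (elim n)
      have oC: "open (aff (c n) s ` ?Q)" by (rule open_aff[OF s oQ])
      have "L1dist (aff (c n) s ` ?Q) (chi (eps n) (u n)) (chinu \<nu>) \<le> L1dist ?Q (chi (eps n) (u n)) (chinu \<nu>)"
        using L1_mono[OF ep[rule_format, of n] uS[rule_format, of n] Qb, of "aff (c n) s ` ?Q"] elim borel_open[OF oC] by simp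
      then have "L1dist (aff (c n) s ` ?Q) (chi (eps n) (u n)) (chinu \<nu>) / s\<^sup>2 \<le> L1dist ?Q (chi (eps n) (u n)) (chinu \<nu>) / s\<^sup>2"
        using s by (simp add: divide_right_mono)
      then show ?case using L1_copy[OF nu s ep[rule_format, of n] uS[rule_format, of n], of "c n"] by linarith
    qed
  qed
qed


lemma key:
  assumes nu: "\<nu> \<in> sphere (0::pt) 1" and ep: "\<forall>n. eps n > 0" and el: "eps \<longlonglongrightarrow> 0"
    and uS: "\<forall>n. u n \<in> SF (eps n)"
    and L1: "(\<lambda>n. L1dist (Sq \<nu> 1) (chi (eps n) (u n)) (chinu \<nu>)) \<longlonglongrightarrow> 0"
    and FQ: "(\<lambda>n. ereal (Fen (eps n) (u n) (Sq \<nu> 1))) \<longlonglongrightarrow> psi 1 1 \<nu>"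
    and d: "\<delta> > 0"
  shows "(\<lambda>n. Fen (eps n) (u n) (Sq \<nu> 1 - closure (Rect \<nu> 1 \<delta>))) \<longlonglongrightarrow> 0"
proof -
  let ?Q = "Sq \<nu> 1"
  let ?D = "Sq \<nu> 1 - closure (Rect \<nu> 1 \<delta>)"
  let ?F = "\<lambda>n A. Fen (eps n) (u n) A"
  have e0: "eps n \<ge> 0" for n using ep by (simp add: less_imp_le)
  have p0: "0 \<le> psi 1 1 \<nu>"
    by (rule LIMSEQ_le_const[OF FQ]) (use Fen_nonneg[OF e0] in auto)
  have p1: "psi 1 1 \<nu> \<le> 630" by (rule psi_finite[OF nu])
  define P where "P = real_of_ereal (psi 1 1 \<nu>)"
  have psiP: "psi 1 1 \<nu> = ereal P" unfolding P_def using p0 p1 by (cases "psi 1 1 \<nu>") auto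
  have P0: "P \<ge> 0" using p0 psiP by simp
  have FQr: "(\<lambda>n. ?F n ?Q) \<longlonglongrightarrow> P" using FQ unfolding psiP by simp
  have finQ: "finite (TriIn (eps n) ?Q)" for n using finite_TriIn[OF ep[rule_format] Sq_sub_ball[OF nu]] .
  have oQ: "open ?Q" unfolding Sq_def by (rule Rect_open)
  show ?thesis
  proof (rule order_tendstoI)
    fix a :: real assume "a < 0"
    show "eventually (\<lambda>n. a < ?F n ?D) sequentially"
    proof (rule always_eventually, rule allI)
      fix n show "a < ?F n ?D" using Fen_nonneg[OF e0[of n], of "u n" ?D] \<open>a < 0\<close> by linarith
    qed
  next
    fix \<eta> :: real assume eta: "0 < \<eta>"
    define N where "N = nat \<lceil>1 / \<delta>\<rceil> + 1"
    have N1: "N \<ge> 1" unfolding N_def by simp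
    have Npos: "real N > 0" using N1 by simp
    have "real N \<ge> 1 / \<delta>" unfolding N_def by linarith
    then have Nd: "1 / real N \<le> \<delta>" using d Npos by (simp add: field_simps)
    define \<theta> where "\<theta> = min (1/2) (\<eta> / (2 * (P + 1)))"
    have th0: "\<theta> > 0" unfolding \<theta>_def using eta P0 by simp
    have th1: "\<theta> \<le> 1/2" unfolding \<theta>_def by (rule min.cobounded1)
    have thP: "\<theta> * P \<le> \<eta> / 2"
    proof -
      have "\<theta> * P \<le> \<eta> / (2 * (P + 1)) * P" unfolding \<theta>_def using P0 by (intro mult_right_mono) auto
      also have "\<dots> \<le> \<eta> / 2" using P0 eta by (simp add: field_simps)
      finally show ?thesis .
    qed
    define s where "s = (1 - \<theta>) / N"
    have s0: "s > 0" unfolding s_def using th1 Npos by simp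
    define \<gamma> where "\<gamma> = \<eta> / 8"
    have g0: "\<gamma> > 0" unfolding \<gamma>_def using eta by simp
    define z where "z k = (-1/2 + (real k + 1/2) / N) *\<^sub>R perp \<nu>" for k :: nat
    have zn: "inner (z k) \<nu> = 0" for k unfolding z_def using inner_perp_self by simp
    define W where "W n k = (SOME w. w \<in> Lat1 \<and> norm (eps n *\<^sub>R w - z k) \<le> 4 * eps n)" for n k
    have W: "W n k \<in> Lat1 \<and> norm (eps n *\<^sub>R W n k - z k) \<le> 4 * eps n" for n k
      unfolding W_def using lattice_approx[OF ep[rule_format, of n], of "z k"] by (rule someI2_bex) auto
    define C where "C n k = aff (eps n *\<^sub>R W n k) s ` ?Q" for n k
    have small: "eventually (\<lambda>n. eps n < \<theta> / (8 * N)) sequentially"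
      using order_tendstoD(2)[OF el, of "\<theta> / (8 * N)"] th0 Npos by simp
    have geo_pt: "-1/2 + real k / real N < inner x (perp \<nu>) \<and> inner x (perp \<nu>) < -1/2 + (real k + 1) / real N
        \<and> \<bar>inner x \<nu>\<bar> < 1 / (2 * real N)"
      if en: "eps n < \<theta> / (8 * N)" and k: "k < N" and x: "x \<in> C n k" for n k x
    proof -
      have sm: "s / 2 + 4 * eps n < 1 / (2 * N)"
      proof -
        have "4 * eps n < \<theta> / (2 * N)" using en by (simp add: field_simps)
        moreover have "s / 2 + \<theta> / (2 * N) = 1 / (2 * N)" unfolding s_def using Npos by (simp add: field_simps)
        ultimately show ?thesis by linarith
      qed
      have c: "norm (eps n *\<^sub>R W n k - (-1/2 + (real k + 1/2) / N) *\<^sub>R perp \<nu>) \<le> 4 * eps n"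
        using W[of n k] unfolding z_def by simp
      have x': "x \<in> aff (eps n *\<^sub>R W n k) s ` Sq \<nu> 1" using x unfolding C_def .
      note cg = copy_geom[OF nu N1 k s0 c _ x']
      show ?thesis using cg[OF sm] by (simp add: add.commute)
    qed
    have geo: "eventually (\<lambda>n. \<forall>k<N. \<forall>x\<in>C n k. -1/2 + real k / real N < inner x (perp \<nu>) \<and> inner x (perp \<nu>) < -1/2 + (real k + 1) / real N
        \<and> \<bar>inner x \<nu>\<bar> < 1 / (2 * real N)) sequentially"
      using small by eventually_elim (use geo_pt in blast)
    have liminfk: "eventually (\<lambda>n. ?F n (C n k) / s > P - \<gamma>) sequentially" if k: "k < N" for k
    proof -
      have sub: "eventually (\<lambda>n. aff (eps n *\<^sub>R W n k) s ` ?Q \<subseteq> ?Q) sequentially"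
        using geo
      proof eventually_elim
        case (elim n)
        show ?case
        proof
          fix x assume "x \<in> aff (eps n *\<^sub>R W n k) s ` ?Q"
          then have "x \<in> C n k" unfolding C_def .
          then have h: "-1/2 + real k / real N < inner x (perp \<nu>)" "inner x (perp \<nu>) < -1/2 + (real k + 1) / real N"
            "\<bar>inner x \<nu>\<bar> < 1 / (2 * real N)" using elim k by auto
          have f1: "real k / N \<ge> 0" using Npos by simp
          have f2: "(real k + 1) / N \<le> 1" using k Npos by (simp add: field_simps)
          have f3: "1 / (2 * real N) \<le> 1/2" using N1 by (simp add: field_simps)
          have a1: "\<bar>inner x (perp \<nu>)\<bar> < 1/2" using h(1,2) f1 f2 unfolding abs_less_iff by linarith
          have a2: "\<bar>inner x \<nu>\<bar> < 1/2" using h(3) f3 by linarith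
          show "x \<in> ?Q" using a1 a2 by (simp add: Sq_def Rect_def)
        qed
      qed
      have Lk: "(\<lambda>n. L1dist ?Q (chi (eps n / s) (\<lambda>x. u n (aff (eps n *\<^sub>R W n k) s x))) (chinu \<nu>)) \<longlonglongrightarrow> 0"
        by (rule copy_L1[OF nu ep el uS L1 s0 _ _ zn[of k] sub]) (use W in auto)
      have ep': "\<forall>n. eps n / s > 0" using ep s0 by simp
      have el': "(\<lambda>n. eps n / s) \<longlonglongrightarrow> 0" using tendsto_divide[OF el tendsto_const, of s] s0 by simp
      have uS': "\<forall>n. (\<lambda>x. u n (aff (eps n *\<^sub>R W n k) s x)) \<in> SF (eps n / s)"
        using SF_shift[OF s0] W uS by blast
      have "psi 1 1 \<nu> \<le> liminf (\<lambda>n. ereal (Fen (eps n / s) (\<lambda>x. u n (aff (eps n *\<^sub>R W n k) s x)) (Rect \<nu> 1 1)))"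
        by (rule psi_le[OF ep' el' uS']) (use Lk in \<open>simp add: Sq_def\<close>)
      also have "\<dots> = liminf (\<lambda>n. ereal (?F n (C n k) / s))"
        unfolding C_def using Fen_shift[OF s0] W by (simp add: Sq_def)
      finally have le: "ereal P \<le> liminf (\<lambda>n. ereal (?F n (C n k) / s))" using psiP by simp
      have "ereal (P - \<gamma>) < ereal P" using g0 by simp
      then have "ereal (P - \<gamma>) < liminf (\<lambda>n. ereal (?F n (C n k) / s))" using le by (rule less_le_trans)
      from less_LiminfD[OF this] show ?thesis by simp
    qed
    have allk: "eventually (\<lambda>n. \<forall>k\<in>{..<N}. ?F n (C n k) / s > P - \<gamma>) sequentially"
      by (rule eventually_ball_finite) (use liminfk in auto)
    have FQe: "eventually (\<lambda>n. ?F n ?Q < P + \<gamma>) sequentially"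
      using order_tendstoD(2)[OF FQr, of "P + \<gamma>"] g0 by simp
    show "eventually (\<lambda>n. ?F n ?D < \<eta>) sequentially"
      using geo allk FQe
    proof eventually_elim
      case (elim n)
      define A where "A k = (if k < N then C n k else ?D)" for k
      have CQ: "C n k \<subseteq> ?Q \<inter> Rect \<nu> 1 \<delta>" if k: "k < N" for k
      proof
        fix x assume "x \<in> C n k"
        then have h: "-1/2 + real k / real N < inner x (perp \<nu>)" "inner x (perp \<nu>) < -1/2 + (real k + 1) / real N"
          "\<bar>inner x \<nu>\<bar> < 1 / (2 * real N)" using elim(1) k by auto
        have f1: "real k / N \<ge> 0" using Npos by simp
        have f2: "(real k + 1) / N \<le> 1" using k Npos by (simp add: field_simps)
        have f3: "1 / (2 * real N) \<le> 1/2" using N1 by (simp add: field_simps)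
        have f4: "1 / (2 * real N) \<le> \<delta> / 2" using Nd by simp
        have a1: "\<bar>inner x (perp \<nu>)\<bar> < 1/2" using h(1,2) f1 f2 unfolding abs_less_iff by linarith
        have a2: "\<bar>inner x \<nu>\<bar> < 1/2" using h(3) f3 by linarith
        have a3: "\<bar>inner x \<nu>\<bar> < \<delta>/2" using h(3) f4 by linarith
        show "x \<in> ?Q \<inter> Rect \<nu> 1 \<delta>" using a1 a2 a3 by (simp add: Sq_def Rect_def)
      qed
      have sub: "A k \<subseteq> ?Q" if "k \<in> {..<Suc N}" for k using CQ unfolding A_def by auto
      have disj: "A k \<inter> A l = {}" if "k \<in> {..<Suc N}" "l \<in> {..<Suc N}" "k \<noteq> l" for k l
      proof (cases "k < N \<and> l < N")
        case True
        show ?thesis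
        proof (rule ccontr)
          assume "A k \<inter> A l \<noteq> {}"
          then obtain x where x: "x \<in> C n k" "x \<in> C n l" using True unfolding A_def by auto
          have hk: "-1/2 + real k / real N < inner x (perp \<nu>)" "inner x (perp \<nu>) < -1/2 + (real k + 1) / real N"
            using elim(1) True x by auto
          have hl: "-1/2 + real l / real N < inner x (perp \<nu>)" "inner x (perp \<nu>) < -1/2 + (real l + 1) / real N"
            using elim(1) True x by auto
          have "k < l \<or> l < k" using that by auto
          then show False
          proof
            assume "k < l" then have "real k + 1 \<le> real l" by simp
            then have "(real k + 1) / N \<le> real l / N" using Npos by (simp add: divide_right_mono)
            then show False using hk hl by linarith
          next
            assume "l < k" then have "real l + 1 \<le> real k" by simp
            then have "(real l + 1) / N \<le> real k / N" using Npos by (simp add: divide_right_mono)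
            then show False using hk hl by linarith
          qed
        qed
      next
        case False
        then have "(k < N \<and> l = N) \<or> (l < N \<and> k = N)" using that by auto
        then show ?thesis
        proof
          assume "k < N \<and> l = N"
          then show ?thesis using CQ[of k] closure_subset[of "Rect \<nu> 1 \<delta>"] unfolding A_def by auto
        next
          assume "l < N \<and> k = N"
          then show ?thesis using CQ[of l] closure_subset[of "Rect \<nu> 1 \<delta>"] unfolding A_def by auto
        qed
      qed
      have "(\<Sum>k\<in>{..<Suc N}. ?F n (A k)) \<le> ?F n ?Q"
        by (rule Fen_sum_disj[OF e0 finQ]) (use sub disj in auto)
      moreover have "(\<Sum>k\<in>{..<Suc N}. ?F n (A k)) = (\<Sum>k<N. ?F n (C n k)) + ?F n ?D"
        unfolding A_def by simp
      moreover have "(\<Sum>k<N. ?F n (C n k)) \<ge> (\<Sum>k<N. s * (P - \<gamma>))"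
      proof (rule sum_mono)
        fix k assume "k \<in> {..<N}"
        then have "?F n (C n k) / s > P - \<gamma>" using elim(2) by auto
        then show "s * (P - \<gamma>) \<le> ?F n (C n k)" using s0 by (simp add: field_simps)
      qed
      moreover have "(\<Sum>k<N. s * (P - \<gamma>)) = (1 - \<theta>) * (P - \<gamma>)" unfolding s_def using Npos by simp
      ultimately have "?F n ?D \<le> P + \<gamma> - (1 - \<theta>) * (P - \<gamma>)" using elim(3) by linarith
      also have "\<dots> = \<theta> * P + \<gamma> * (2 - \<theta>)" by (simp add: algebra_simps)
      also have "\<dots> \<le> \<eta> / 2 + \<gamma> * 2"
      proof -
        have "\<gamma> * (2 - \<theta>) \<le> \<gamma> * 2" using g0 th0 by (intro mult_left_mono) auto
        then show ?thesis using thP by linarith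
      qed
      also have "\<dots> < \<eta>" unfolding \<gamma>_def using eta by simp
      finally show ?case .
    qed
  qed
qed


lemma Sq_mono: "a \<le> b \<Longrightarrow> Sq \<nu> a \<subseteq> Sq \<nu> b"
  unfolding Sq_def Rect_def by auto

lemma avg_exists: fixes f :: "nat \<Rightarrow> real" assumes I: "finite I" "I \<noteq> {}" and S: "sum f I \<le> B"
  shows "\<exists>k\<in>I. f k \<le> B / card I"
proof (rule ccontr)
  assume "\<not> (\<exists>k\<in>I. f k \<le> B / card I)"
  then have "\<forall>k\<in>I. B / card I < f k" by auto
  then have "sum (\<lambda>_. B / card I) I < sum f I" by (intro sum_strict_mono[OF I]) auto
  moreover have "sum (\<lambda>_. B / card I) I = B" using I by simp
  ultimately show False using S by simp
qed

lemma strip_facts: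
  assumes nu: "\<nu> \<in> sphere (0::pt) 1" and e: "\<epsilon> > 0" and u: "u \<in> SF \<epsilon>" and d: "\<delta> > 0"
    and small: "\<epsilon> \<le> \<delta> / 24"
    and K_def: "K = nat (\<lceil>\<delta> / (12 * \<epsilon>)\<rceil> - 1)"
    and rr_def: "rr = (\<lambda>k::nat. 1 - 3 * \<delta> + 12 * \<epsilon> * k)"
  shows "K \<ge> 1" "real K * \<epsilon> \<ge> \<delta> / 24"
    "\<And>k. k \<in> {1..K} \<Longrightarrow> rr k \<in> {1 - 3 * \<delta> <..< 1 - 2 * \<delta>}"
    "(\<Sum>k\<in>{1..K}. Fen \<epsilon> u (strip \<nu> \<delta> \<epsilon> (rr k)) + L1dist (strip \<nu> \<delta> \<epsilon> (rr k)) (chi \<epsilon> u) (chinu \<nu>))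
      \<le> Fen \<epsilon> u (Sq \<nu> 1 - closure (Rect \<nu> 1 \<delta>)) + L1dist (Sq \<nu> 1) (chi \<epsilon> u) (chinu \<nu>)"
proof -
  let ?Q = "Sq \<nu> 1"
  let ?D = "Sq \<nu> 1 - closure (Rect \<nu> 1 \<delta>)"
  define x where "x = \<delta> / (12 * \<epsilon>)"
  have x2: "x \<ge> 2" unfolding x_def using small e by (simp add: field_simps)
  have cc: "real_of_int \<lceil>x\<rceil> - 1 < x" "x \<le> real_of_int \<lceil>x\<rceil>" using ceiling_correct[of x] by auto
  have "\<lceil>x\<rceil> - 1 \<ge> 0" using cc x2 by linarith
  then have RK: "real K = real_of_int \<lceil>x\<rceil> - 1" unfolding K_def x_def[symmetric] by simp
  have Kx: "real K \<ge> x - 1" "real K < x" using RK cc by linarith+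
  show K1: "K \<ge> 1" using Kx x2 by linarith
  have "real K \<ge> x / 2" using Kx x2 by linarith
  then have "real K * \<epsilon> \<ge> x / 2 * \<epsilon>" using e by (intro mult_right_mono) auto
  also have "x / 2 * \<epsilon> = \<delta> / 24" unfolding x_def using e by (simp add: field_simps)
  finally show "real K * \<epsilon> \<ge> \<delta> / 24" .
  have Kd: "12 * \<epsilon> * real K < \<delta>" using Kx(2) e unfolding x_def by (simp add: field_simps)
  show rin: "rr k \<in> {1 - 3 * \<delta> <..< 1 - 2 * \<delta>}" if k: "k \<in> {1..K}" for k
  proof -
    have "real k \<ge> 1" "real k \<le> real K" using k by auto
    then have "12 * \<epsilon> * real k > 0" "12 * \<epsilon> * real k \<le> 12 * \<epsilon> * real K" using e by (auto intro: mult_left_mono)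
    then show ?thesis unfolding rr_def using Kd by simp
  qed
  define S where "S k = strip \<nu> \<delta> \<epsilon> (rr k)" for k
  have SQ: "S k \<subseteq> ?D" if k: "k \<in> {1..K}" for k
  proof -
    have "rr k + 12 * \<epsilon> \<le> 1" using rin[OF k] small d by simp
    then have "Sq \<nu> (rr k + 12 * \<epsilon>) \<subseteq> ?Q" by (rule Sq_mono)
    then show ?thesis unfolding S_def strip_def by auto
  qed
  have Sdisj: "S k \<inter> S l = {}" if "k \<in> {1..K}" "l \<in> {1..K}" "k \<noteq> l" for k l
  proof -
    have gen: "S a \<inter> S b = {}" if ab: "a < b" for a b
    proof -
      have "real a + 1 \<le> real b" using ab by simp
      then have "12 * \<epsilon> * (real a + 1) \<le> 12 * \<epsilon> * real b" using e by (intro mult_left_mono) auto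
      then have "rr a + 12 * \<epsilon> \<le> rr b" unfolding rr_def by (simp add: algebra_simps)
      then have "Sq \<nu> (rr a + 12 * \<epsilon>) \<subseteq> closure (Sq \<nu> (rr b))" using Sq_mono closure_subset by blast
      then show ?thesis unfolding S_def strip_def by auto
    qed
    show ?thesis using that gen[of k l] gen[of l k] by (cases "k < l") auto
  qed
  have oS: "open (S k)" for k unfolding S_def strip_def Sq_def by (intro open_Diff Rect_open closed_Un closed_closure)
  have Qb: "?Q \<in> sets borel" "bounded ?Q" using Rect_open[of \<nu> 1 1] Rect_bounded[OF nu] unfolding Sq_def by auto
  have finD: "finite (TriIn \<epsilon> ?D)" using finite_TriIn[OF e, of ?D 1] Sq_sub_ball[OF nu] by blast
  have sF: "(\<Sum>k\<in>{1..K}. Fen \<epsilon> u (S k)) \<le> Fen \<epsilon> u ?D"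
    by (rule Fen_sum_disj[OF _ finD]) (use e SQ Sdisj in auto)
  have sL: "(\<Sum>k\<in>{1..K}. L1dist (S k) (chi \<epsilon> u) (chinu \<nu>)) \<le> L1dist ?Q (chi \<epsilon> u) (chinu \<nu>)"
    by (rule L1_sum_disj[OF e u Qb]) (use oS SQ Sdisj in auto)
  show "(\<Sum>k\<in>{1..K}. Fen \<epsilon> u (strip \<nu> \<delta> \<epsilon> (rr k)) + L1dist (strip \<nu> \<delta> \<epsilon> (rr k)) (chi \<epsilon> u) (chinu \<nu>))
      \<le> Fen \<epsilon> u ?D + L1dist ?Q (chi \<epsilon> u) (chinu \<nu>)"
    using sF sL unfolding S_def by (simp add: sum.distrib)
qed


theorem lemma4p4:
  fixes \<nu> :: pt and eps :: "nat \<Rightarrow> real" and u :: "nat \<Rightarrow> pt \<Rightarrow> pt"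
  assumes "\<nu> \<in> sphere 0 1"
    and "\<forall>n. eps n > 0" and "eps \<longlonglongrightarrow> 0"
    and "\<forall>n. u n \<in> SF (eps n)"
    and "(\<lambda>n. L1dist (Sq \<nu> 1) (chi (eps n) (u n)) (chinu \<nu>)) \<longlonglongrightarrow> 0"
    and "(\<lambda>n. ereal (Fen (eps n) (u n) (Sq \<nu> 1))) \<longlonglongrightarrow> psi 1 1 \<nu>"
  shows "\<forall>\<delta>>0. \<exists>\<sigma> :: nat \<Rightarrow> real. \<sigma> \<longlonglongrightarrow> 0 \<and> (\<exists>r :: nat \<Rightarrow> real. \<forall>n.
           r n \<in> {1 - 3 * \<delta> <..< 1 - 2 * \<delta>} \<and>
           Fen (eps n) (u n) (strip \<nu> \<delta> (eps n) (r n))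
             + L1dist (strip \<nu> \<delta> (eps n) (r n)) (chi (eps n) (u n)) (chinu \<nu>)
             \<le> eps n * \<sigma> n)"
proof (intro allI impI)
  fix \<delta> :: real assume d: "\<delta> > 0"
  note nu = assms(1) and ep = assms(2) and el = assms(3) and uS = assms(4) and L1 = assms(5) and FQ = assms(6)
  define val where "val n r = Fen (eps n) (u n) (strip \<nu> \<delta> (eps n) r) + L1dist (strip \<nu> \<delta> (eps n) r) (chi (eps n) (u n)) (chinu \<nu>)" for n r
  define B where "B n = Fen (eps n) (u n) (Sq \<nu> 1 - closure (Rect \<nu> 1 \<delta>)) + L1dist (Sq \<nu> 1) (chi (eps n) (u n)) (chinu \<nu>)" for n
  define K where "K n = nat (\<lceil>\<delta> / (12 * eps n)\<rceil> - 1)" for n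
  define rr where "rr n = (\<lambda>k::nat. 1 - 3 * \<delta> + 12 * eps n * k)" for n
  define kk where "kk n = (SOME k. k \<in> {1..K n} \<and> val n (rr n k) \<le> B n / card {1..K n})" for n
  define r where "r n = (if eps n \<le> \<delta> / 24 then rr n (kk n) else 1 - 5 * \<delta> / 2)" for n
  define \<sigma> where "\<sigma> n = val n (r n) / eps n" for n
  have good: "r n \<in> {1 - 3 * \<delta> <..< 1 - 2 * \<delta>} \<and> val n (r n) \<le> B n / K n * 1 \<and> K n \<ge> 1 \<and> real (K n) * eps n \<ge> \<delta> / 24"
    if sm: "eps n \<le> \<delta> / 24" for n
  proof -
    note sf = strip_facts[OF nu ep[rule_format, of n] uS[rule_format, of n] d sm K_def[of n] rr_def[of n]]
    have ex: "\<exists>k\<in>{1..K n}. val n (rr n k) \<le> B n / card {1..K n}"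
      by (rule avg_exists) (use sf(1) sf(4) in \<open>auto simp: val_def B_def\<close>)
    then have kk: "kk n \<in> {1..K n} \<and> val n (rr n (kk n)) \<le> B n / card {1..K n}"
      unfolding kk_def by (rule someI2_bex) auto
    show ?thesis using kk sf(1,2) sf(3)[of "kk n"] sm unfolding r_def by simp
  qed
  have rin: "r n \<in> {1 - 3 * \<delta> <..< 1 - 2 * \<delta>}" for n
  proof (cases "eps n \<le> \<delta> / 24")
    case True then show ?thesis using good by blast
  next
    case False then show ?thesis unfolding r_def using d by simp
  qed
  have ineq: "val n (r n) \<le> eps n * \<sigma> n" for n
    unfolding \<sigma>_def using ep[rule_format, of n] by simp
  have val0: "val n r' \<ge> 0" for n r'
    unfolding val_def using Fen_nonneg[of "eps n" "u n"] ep[rule_format, of n] L1_nonneg by (simp add: add_nonneg_nonneg less_imp_le)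
  have Blim: "B \<longlonglongrightarrow> 0"
    unfolding B_def using tendsto_add[OF key[OF nu ep el uS L1 FQ d] L1] by simp
  have B0: "B n \<ge> 0" for n
    unfolding B_def using Fen_nonneg[of "eps n" "u n"] ep[rule_format, of n] L1_nonneg by (simp add: add_nonneg_nonneg less_imp_le)
  have slim: "\<sigma> \<longlonglongrightarrow> 0"
  proof (rule tendsto_sandwich[where f="\<lambda>n. 0" and h="\<lambda>n. (24 / \<delta>) * B n"])
    show "eventually (\<lambda>n. 0 \<le> \<sigma> n) sequentially"
      unfolding \<sigma>_def using val0 ep by (auto intro!: always_eventually divide_nonneg_pos)
    have "\<delta> / 24 > 0" using d by simp
    from order_tendstoD(2)[OF el this] have "eventually (\<lambda>n. eps n < \<delta> / 24) sequentially" .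
    then show "eventually (\<lambda>n. \<sigma> n \<le> (24 / \<delta>) * B n) sequentially"
    proof eventually_elim
      case (elim n)
      then have sm: "eps n \<le> \<delta> / 24" by simp
      note g = good[OF sm]
      have e: "eps n > 0" using ep by simp
      have Kp: "real (K n) > 0" using g by simp
      have "\<sigma> n = val n (r n) / eps n" unfolding \<sigma>_def ..
      also have "\<dots> \<le> (B n / K n) / eps n" using g e by (intro divide_right_mono) auto
      also have "\<dots> = B n / (K n * eps n)" by simp
      also have "\<dots> \<le> B n / (\<delta> / 24)" using g B0[of n] d by (intro divide_left_mono) auto
      also have "\<dots> = (24 / \<delta>) * B n" by simp
      finally show ?case .
    qed
    show "(\<lambda>n. 0) \<longlonglongrightarrow> (0::real)" by simp
    show "(\<lambda>n. (24 / \<delta>) * B n) \<longlonglongrightarrow> 0" by (rule tendsto_mult_right_zero[OF Blim])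
  qed
  show "\<exists>\<sigma> :: nat \<Rightarrow> real. \<sigma> \<longlonglongrightarrow> 0 \<and> (\<exists>r :: nat \<Rightarrow> real. \<forall>n.
           r n \<in> {1 - 3 * \<delta> <..< 1 - 2 * \<delta>} \<and>
           Fen (eps n) (u n) (strip \<nu> \<delta> (eps n) (r n))
             + L1dist (strip \<nu> \<delta> (eps n) (r n)) (chi (eps n) (u n)) (chinu \<nu>)
             \<le> eps n * \<sigma> n)"
    using slim rin ineq unfolding val_def by blast
qed

end
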